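(* Let $\mu$ be a valuated matroid on $[n]$. (i) Let $f=(f_1,f_2):[n]\cup\{o\}\to([n]\cup\{o\})\times\mathbb{T}$ be a map such that for every $i\in[n]$ there is $k\in K$ with $f_2(i)=\mathrm{val}(k)$. Then for the associated weakly monomial matrix $A_f$, $\overline{\operatorname{trop}}(f^{-1}(\mu))=\mathrm{val}(A_f)\odot\overline{\operatorname{trop}}(\mu)$. (ii) Conversely, if $A_f\in K^{n\times n}$ is a weakly monomial matrix, its associated map $f$ satisfies $\overline{\operatorname{trop}}(f^{-1}(\mu))=\mathrm{val}(A_f)\odot\overline{\operatorname{trop}}(\mu)$.
   Context: $K$ is a field with non-Archimedean valuation $\mathrm{val}:K\to\mathbb{T}=\mathbb{R}\cup\{\infty\}$; $(\mathrm{val}(M)\odot v)_i=\min_j(\mathrm{val}(M_{ij})+v_j)$, applied pointwise to sets. Valuated matroid of rank $r$ on finite $E$: $\nu:\binom{E}{r}\to\mathbb{T}$, not identically $\infty$, with exchange property (for all $I,J$, $i\in I\setminus J$ there is $j\in J\setminus I$ with $\nu(I)+\nu(J)\ge\nu((I\setminus i)\cup j)+\nu((J\setminus j)\cup i)$), up to additive constants; $\overline{\operatorname{trop}}(\nu)\subseteq\mathbb{P}(\mathbb{T}^E)$ is the set of $x$ with $\min_e(C_\nu(I)_e+x_e)$ attained at least twice for all $I\in\binom{E}{r+1}$ with $C_\nu(I)\ne(\infty,\dots)$, where $C_\nu(I)_e=\nu(I\setminus e)$ for $e\in I$, $\infty$ else. Pointed matroid $\mu_o$: $\mu$ extended to $[n]\cup\{o\}$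 with $o$ a loop. With $S=f_1([n]\cup\{o\})$, $f^{-1}(\mu)(B)=\mu_o|_S(f_1(B))+\sum_{i\in B}f_2(i)$ where $\mu_o|_S$ is the restriction of $\mu_o$ to $S$ and $|B|$ equals its rank (value $\infty$ if $|f_1(B)|$ too small); $\overline{\operatorname{trop}}(f^{-1}(\mu))$ denotes the projection to the coordinates in $[n]$ of its tropical linear space. Weakly monomial: at most one nonzero entry per row. Associated matrix of $f$: $(A_f)_{ij}=k_i$ if $f_1(i)=j\in[n]$ with $\mathrm{val}(k_i)=f_2(i)$, and $0$ otherwise. Associated map of a weakly monomial $M$: $f(o)=(o,\infty)$; $f(i)=(o,\infty)$ if row $i$ is zero; $f(i)=(j,\mathrm{val}(M_{ij}))$ if $M_{ij}\ne0$. *)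

theory Defs
  imports "HOL-Library.Extended_Real" "HOL-Library.FuncSet"
begin

(* Tropical numbers T = R \<union> {\<infinity>}, represented inside ereal (excluding -\<infinity>). *)
definition tropT :: "ereal set" where
  "tropT = {x. x \<noteq> -\<infinity>}"

definition valuation :: "('k::field \<Rightarrow> ereal) \<Rightarrow> bool" where
  "valuation v \<longleftrightarrow>
     (\<forall>a. v a \<in> tropT) \<and> (\<forall>a. v a = \<infinity> \<longleftrightarrow> a = 0) \<and>
     (\<forall>a b. v (a * b) = v a + v b) \<and> (\<forall>a b. min (v a) (v b) \<le> v (a + b))"

(* Valuated matroid of rank r on the finite ground set E
   (only the values on r-subsets of E matter). *)
definition valuated_matroid :: "'e set \<Rightarrow> nat \<Rightarrow> ('e set \<Rightarrow> ereal) \<Rightarrow> bool" where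
  "valuated_matroid E r \<nu> \<longleftrightarrow>
     finite E \<and>
     (\<forall>B. B \<subseteq> E \<and> card B = r \<longrightarrow> \<nu> B \<in> tropT) \<and>
     (\<exists>B. B \<subseteq> E \<and> card B = r \<and> \<nu> B \<noteq> \<infinity>) \<and>
     (\<forall>I J i. I \<subseteq> E \<and> card I = r \<and> J \<subseteq> E \<and> card J = r \<and> i \<in> I - J \<longrightarrow>
        (\<exists>j \<in> J - I. \<nu> (insert j (I - {i})) + \<nu> (insert i (J - {j})) \<le> \<nu> I + \<nu> J))"

definition circ :: "('e set \<Rightarrow> ereal) \<Rightarrow> 'e set \<Rightarrow> 'e \<Rightarrow> ereal" where
  "circ \<nu> I e = (if e \<in> I then \<nu> (I - {e}) else \<infinity>)"

definition min_twice :: "'e set \<Rightarrow> ('e \<Rightarrow> ereal) \<Rightarrow> bool" where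
  "min_twice E g \<longleftrightarrow>
     (\<exists>e\<in>E. \<exists>e'\<in>E. e \<noteq> e' \<and> g e = g e' \<and> (\<forall>d\<in>E. g e \<le> g d))"

(* Affine cone over the tropical linear space (points x \<in> T^E, extensional on E).
   The projective space P(T^E) corresponds to the non-\<infinity> points modulo R\<one>;
   all sets below are closed under adding real constants. *)
definition trop :: "'e set \<Rightarrow> nat \<Rightarrow> ('e set \<Rightarrow> ereal) \<Rightarrow> ('e \<Rightarrow> ereal) set" where
  "trop E r \<nu> = {x \<in> E \<rightarrow>\<^sub>E tropT.
     \<forall>I. I \<subseteq> E \<and> card I = Suc r \<and> (\<exists>e\<in>E. circ \<nu> I e \<noteq> \<infinity>) \<longrightarrow>
        min_twice E (\<lambda>e. circ \<nu> I e + x e)}"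

definition tmv :: "'e set \<Rightarrow> ('e \<Rightarrow> 'e \<Rightarrow> ereal) \<Rightarrow> ('e \<Rightarrow> ereal) \<Rightarrow> ('e \<Rightarrow> ereal)" where
  "tmv E M v = (\<lambda>i\<in>E. INF j\<in>E. M i j + v j)"

definition rank_of :: "'e set \<Rightarrow> nat \<Rightarrow> ('e set \<Rightarrow> ereal) \<Rightarrow> 'e set \<Rightarrow> nat" where
  "rank_of E r \<nu> S = Max {card A | A. A \<subseteq> S \<and> (\<exists>B. B \<subseteq> E \<and> card B = r \<and> \<nu> B \<noteq> \<infinity> \<and> A \<subseteq> B)}"

(* Restriction (deletion of E - S) of the valuated matroid \<nu>, defined on
   subsets of S of size rank_of E r \<nu> S (well-defined up to an additive constant). *)
definition restr :: "'e set \<Rightarrow> nat \<Rightarrow> ('e set \<Rightarrow> ereal) \<Rightarrow> 'e set \<Rightarrow> 'e set \<Rightarrow> ereal" where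
  "restr E r \<nu> S B =
     (INF J \<in> {J. J \<subseteq> E - S \<and> card J = r - rank_of E r \<nu> S}. \<nu> (B \<union> J))"

(* [n] = {1..n}; the extra point o is 0, so [n] \<union> {o} = {0..n}. *)


(* Pointed matroid \<mu>_o on {0..n}: o is a loop. *)
definition pointed :: "(nat set \<Rightarrow> ereal) \<Rightarrow> nat set \<Rightarrow> ereal" where
  "pointed \<mu> B = (if 0 \<in> B then \<infinity> else \<mu> B)"

definition pb_S :: "nat \<Rightarrow> (nat \<Rightarrow> nat \<times> ereal) \<Rightarrow> nat set" where
  "pb_S n f = fst ` f ` {0..n}"

(* rank of f^{-1}(\<mu>) = rank of \<mu>_o|_S *)
definition pb_rank :: "nat \<Rightarrow> nat \<Rightarrow> (nat set \<Rightarrow> ereal) \<Rightarrow> (nat \<Rightarrow> nat \<times> ereal) \<Rightarrow> nat" where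
  "pb_rank n r \<mu> f = rank_of {0..n} r (pointed \<mu>) (pb_S n f)"

definition pullback :: "nat \<Rightarrow> nat \<Rightarrow> (nat set \<Rightarrow> ereal) \<Rightarrow> (nat \<Rightarrow> nat \<times> ereal) \<Rightarrow> nat set \<Rightarrow> ereal" where
  "pullback n r \<mu> f B =
     (if card ((fst \<circ> f) ` B) < card B then \<infinity>
      else restr {0..n} r (pointed \<mu>) (pb_S n f) ((fst \<circ> f) ` B) + (\<Sum>i\<in>B. snd (f i)))"

(* Associated matrix A_f (any choice of the k_i). *)
definition assoc_matrix :: "('k::field \<Rightarrow> ereal) \<Rightarrow> nat \<Rightarrow> (nat \<Rightarrow> nat \<times> ereal) \<Rightarrow> (nat \<Rightarrow> nat \<Rightarrow> 'k) \<Rightarrow> bool" where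
  "assoc_matrix v n f A \<longleftrightarrow>
     (\<forall>i\<in>{1..n}. \<forall>j\<in>{1..n}.
        (fst (f i) = j \<longrightarrow> v (A i j) = snd (f i)) \<and> (fst (f i) \<noteq> j \<longrightarrow> A i j = 0))"

definition weakly_monomial :: "nat \<Rightarrow> (nat \<Rightarrow> nat \<Rightarrow> 'k::field) \<Rightarrow> bool" where
  "weakly_monomial n M \<longleftrightarrow>
     (\<forall>i\<in>{1..n}. \<forall>j\<in>{1..n}. \<forall>j'\<in>{1..n}. M i j \<noteq> 0 \<and> M i j' \<noteq> 0 \<longrightarrow> j = j')"

definition assoc_map :: "('k::field \<Rightarrow> ereal) \<Rightarrow> nat \<Rightarrow> (nat \<Rightarrow> nat \<Rightarrow> 'k) \<Rightarrow> nat \<Rightarrow> nat \<times> ereal" where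
  "assoc_map v n M i =
     (if i = 0 \<or> (\<forall>j\<in>{1..n}. M i j = 0) then (0, \<infinity>)
      else (let j = (THE j. j \<in> {1..n} \<and> M i j \<noteq> 0) in (j, v (M i j))))"

definition pb_trop :: "nat \<Rightarrow> nat \<Rightarrow> (nat set \<Rightarrow> ereal) \<Rightarrow> (nat \<Rightarrow> nat \<times> ereal) \<Rightarrow> (nat \<Rightarrow> ereal) set" where
  "pb_trop n r \<mu> f = (\<lambda>x. restrict x {1..n}) ` trop {0..n} (pb_rank n r \<mu> f) (pullback n r \<mu> f)"

definition lin_image :: "('k::field \<Rightarrow> ereal) \<Rightarrow> nat \<Rightarrow> (nat \<Rightarrow> nat \<Rightarrow> 'k) \<Rightarrow> nat \<Rightarrow> (nat set \<Rightarrow> ereal) \<Rightarrow> (nat \<Rightarrow> ereal) set" where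
  "lin_image v n A r \<mu> = tmv {1..n} (\<lambda>i j. v (A i j)) ` trop {1..n} r \<mu>"

(* the all-\<infinity> vector on [n], which is not a point of projective space *)
definition inf_vec :: "nat \<Rightarrow> nat \<Rightarrow> ereal" where
  "inf_vec n = (\<lambda>i\<in>{1..n}. \<infinity>)"

end

theory Submission
  imports Defs
begin

lemma INF_att:
  fixes f :: "'a \<Rightarrow> 'b::complete_linorder"
  assumes "finite A" "A \<noteq> {}"
  shows "\<exists>a\<in>A. (INF x\<in>A. f x) = f a"
proof -
  have "Min (f ` A) \<in> f ` A" using assms by simp
  moreover have "Min (f ` A) = (INF x\<in>A. f x)" using assms by (simp add: Min_Inf)
  ultimately show ?thesis by auto
qed

lemma two_elems: assumes "2 \<le> card I" shows "\<exists>a\<in>I. \<exists>b\<in>I. a \<noteq> b"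
proof -
  have "finite I" "I \<noteq> {}" using assms by (auto intro: card_ge_0_finite)
  then obtain a where a: "a \<in> I" by auto
  have "card (I - {a}) \<ge> 1" using assms a \<open>finite I\<close> by simp
  then obtain b where "b \<in> I - {a}" by (metis all_not_in_conv card.empty not_one_le_zero)
  then show ?thesis using a by blast
qed

lemma min_twice_inf:
  assumes "\<exists>a\<in>E. \<exists>b\<in>E. a \<noteq> b" "\<forall>d\<in>E. g d = \<infinity>"
  shows "min_twice E g"
  using assms unfolding min_twice_def by auto

lemma trop_all:
  assumes "x \<in> trop E r \<nu>" "I \<subseteq> E" "card I = Suc r" "\<exists>a\<in>E. \<exists>b\<in>E. a \<noteq> b"
  shows "min_twice E (\<lambda>e. circ \<nu> I e + x e)"
proof (cases "\<exists>e\<in>E. circ \<nu> I e \<noteq> \<infinity>")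
  case True
  then show ?thesis using assms unfolding trop_def by auto
next
  case False
  then show ?thesis using assms(4) by (intro min_twice_inf) auto
qed

lemma mt_family:
  fixes H :: "'l \<Rightarrow> 'e \<Rightarrow> ereal"
  assumes "finite L" "L \<noteq> {}" "finite E" "\<forall>l\<in>L. min_twice E (H l)"
  shows "min_twice E (\<lambda>d. INF l\<in>L. H l d)"
proof -
  obtain l1 where l1: "l1 \<in> L" using assms by auto
  then have "E \<noteq> {}" using assms(4) unfolding min_twice_def by auto
  then have "finite (L \<times> E)" "L \<times> E \<noteq> {}" using assms by auto
  then obtain p where p: "p \<in> L \<times> E" "(INF q\<in>L \<times> E. case_prod H q) = case_prod H p"
    using INF_att by blast
  obtain l0 d0 where pd: "p = (l0, d0)" by (cases p)
  define m where "m = H l0 d0"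
  have l0: "l0 \<in> L" "d0 \<in> E" using p pd by auto
  have mle: "\<And>l d. l \<in> L \<Longrightarrow> d \<in> E \<Longrightarrow> m \<le> H l d"
  proof -
    fix l d assume "l \<in> L" "d \<in> E"
    then have "(INF q\<in>L \<times> E. case_prod H q) \<le> case_prod H (l, d)"
      by (intro INF_lower) auto
    then show "m \<le> H l d" using p pd m_def by simp
  qed
  from assms(4) l0 obtain e e' where ee: "e \<in> E" "e' \<in> E" "e \<noteq> e'" "H l0 e = H l0 e'"
    "\<forall>d\<in>E. H l0 e \<le> H l0 d"
    unfolding min_twice_def by blast
  have he: "H l0 e = m" using ee mle[OF l0(1) ee(1)] l0 m_def by (metis order_antisym)
  have G: "\<And>d. d \<in> E \<Longrightarrow> H l0 d = m \<Longrightarrow> (INF l\<in>L. H l d) = m"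
  proof -
    fix d assume d: "d \<in> E" "H l0 d = m"
    have "(INF l\<in>L. H l d) \<le> m" using d l0 by (metis INF_lower)
    moreover have "m \<le> (INF l\<in>L. H l d)" using mle d by (auto intro: INF_greatest)
    ultimately show "(INF l\<in>L. H l d) = m" by simp
  qed
  have "\<forall>d\<in>E. m \<le> (INF l\<in>L. H l d)" using mle by (auto intro: INF_greatest)
  then show ?thesis unfolding min_twice_def using ee he G
    by (intro bexI[of _ e] bexI[of _ e']) auto
qed

lemma mt_shift:
  assumes "min_twice E g"
  shows "min_twice E (\<lambda>d. g d + ereal c)"
proof -
  obtain e e' where "e \<in> E" "e' \<in> E" "e \<noteq> e'" "g e = g e'" "\<forall>d\<in>E. g e \<le> g d"
    using assms unfolding min_twice_def by blast
  then show ?thesis unfolding min_twice_def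
    by (intro bexI[of _ e] bexI[of _ e']) (auto intro: add_right_mono)
qed

lemma trop_shift:
  assumes "x \<in> trop E r \<nu>"
  shows "(\<lambda>d\<in>E. ereal c + x d) \<in> trop E r \<nu>"
proof -
  have m: "x \<in> E \<rightarrow>\<^sub>E tropT" using assms unfolding trop_def by auto
  have "(\<lambda>d\<in>E. ereal c + x d) \<in> E \<rightarrow>\<^sub>E tropT" using m unfolding tropT_def by auto
  moreover
  { fix I assume I: "I \<subseteq> E \<and> card I = Suc r \<and> (\<exists>e\<in>E. circ \<nu> I e \<noteq> \<infinity>)"
    then have "min_twice E (\<lambda>e. circ \<nu> I e + x e)" using assms unfolding trop_def by auto
    then have "min_twice E (\<lambda>e. circ \<nu> I e + x e + ereal c)" by (rule mt_shift)
    moreover have "\<And>e. e \<in> E \<Longrightarrow> circ \<nu> I e + (\<lambda>d\<in>E. ereal c + x d) e = circ \<nu> I e + x e + ereal c"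
      by (simp add: ac_simps)
    ultimately have "min_twice E (\<lambda>e. circ \<nu> I e + (\<lambda>d\<in>E. ereal c + x d) e)"
      unfolding min_twice_def by (metis (no_types, lifting))
  }
  ultimately show ?thesis unfolding trop_def by blast
qed

lemma add_INF_ereal:
  fixes f :: "'l \<Rightarrow> ereal"
  assumes "finite L" "L \<noteq> {}"
  shows "a + (INF l\<in>L. f l) = (INF l\<in>L. a + f l)"
proof -
  obtain l0 where l0: "l0 \<in> L" "(INF l\<in>L. f l) = f l0" using INF_att[OF assms] by blast
  have "(INF l\<in>L. a + f l) \<le> a + f l0" using l0 by (metis INF_lower)
  moreover have "a + f l0 \<le> (INF l\<in>L. a + f l)"
  proof (rule INF_greatest)
    fix l assume "l \<in> L"
    then have "f l0 \<le> f l" using l0 by (metis INF_lower)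
    then show "a + f l0 \<le> a + f l" by (rule add_left_mono)
  qed
  ultimately show ?thesis using l0 by simp
qed

lemma trop_min:
  assumes "finite L" "L \<noteq> {}" "finite E" "\<forall>l\<in>L. v l \<in> trop E r \<nu>" "\<exists>a\<in>E. \<exists>b\<in>E. a \<noteq> b"
  shows "(\<lambda>d\<in>E. INF l\<in>L. v l d) \<in> trop E r \<nu>"
proof -
  have "(\<lambda>d\<in>E. INF l\<in>L. v l d) \<in> E \<rightarrow>\<^sub>E tropT"
  proof
    fix d assume d: "d \<in> E"
    obtain l0 where "l0 \<in> L" "(INF l\<in>L. v l d) = v l0 d" using INF_att[OF assms(1,2)] by blast
    moreover have "v l0 d \<in> tropT" using assms(4) \<open>l0 \<in> L\<close> d unfolding trop_def by auto
    ultimately show "(\<lambda>d\<in>E. INF l\<in>L. v l d) d \<in> tropT" using d by simp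
  qed auto
  moreover
  { fix I assume I: "I \<subseteq> E" "card I = Suc r"
    have "\<forall>l\<in>L. min_twice E (\<lambda>e. circ \<nu> I e + v l e)"
      using assms(4,5) I trop_all by blast
    then have "min_twice E (\<lambda>e. INF l\<in>L. circ \<nu> I e + v l e)"
      by (rule mt_family[OF assms(1,2,3)])
    moreover have "\<And>e. e \<in> E \<Longrightarrow> circ \<nu> I e + (\<lambda>d\<in>E. INF l\<in>L. v l d) e = (INF l\<in>L. circ \<nu> I e + v l e)"
      using add_INF_ereal[OF assms(1,2)] by simp
    ultimately have "min_twice E (\<lambda>e. circ \<nu> I e + (\<lambda>d\<in>E. INF l\<in>L. v l d) e)"
      unfolding min_twice_def by (metis (no_types, lifting))
  }
  ultimately show ?thesis unfolding trop_def by blast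
qed

lemma cocirc:
  assumes vm: "valuated_matroid E r \<nu>" and r1: "1 \<le> r" and K: "K \<subseteq> E" "card K = r - 1"
  shows "(\<lambda>e\<in>E. if e \<in> K then \<infinity> else \<nu> (insert e K)) \<in> trop E r \<nu>"
proof -
  define D where "D = (\<lambda>e\<in>E. if e \<in> K then \<infinity> else \<nu> (insert e K))"
  have fE: "finite E" using vm unfolding valuated_matroid_def by auto
  have fK: "finite K" using K fE finite_subset by auto
  have cins: "\<And>e. e \<notin> K \<Longrightarrow> card (insert e K) = r" using fK K r1 by simp
  have "D \<in> E \<rightarrow>\<^sub>E tropT"
  proof
    fix e assume e: "e \<in> E"
    show "D e \<in> tropT"
    proof (cases "e \<in> K")
      case True then show ?thesis using e unfolding D_def tropT_def by auto
    next
      case False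
      then show ?thesis using e K cins vm unfolding D_def valuated_matroid_def by auto
    qed
  qed (simp add: D_def)
  moreover
  { fix I assume I: "I \<subseteq> E" "card I = Suc r"
    define g where "g = (\<lambda>e. circ \<nu> I e + D e)"
    have fI: "finite I" using I fE finite_subset by auto
    have "I \<noteq> {}" using I by auto
    then have "E \<noteq> {}" using I by auto
    then obtain e1 where e1: "e1 \<in> E" "(INF e\<in>E. g e) = g e1" using INF_att[OF fE] by blast
    have e1min: "\<forall>d\<in>E. g e1 \<le> g d" using e1 by (metis INF_lower)
    have two: "\<exists>a\<in>E. \<exists>b\<in>E. a \<noteq> b" using two_elems[of I] I r1 by auto
    have "min_twice E g"
    proof (cases "g e1 = \<infinity>")
      case True
      then have "\<forall>d\<in>E. g d = \<infinity>" using e1min by (metis ereal_infty_less_eq(1))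
      then show ?thesis using two by (intro min_twice_inf) auto
    next
      case False
      then have e1I: "e1 \<in> I" and e1K: "e1 \<notin> K"
        unfolding g_def circ_def D_def using e1 by (auto split: if_splits)
      have ge1: "g e1 = \<nu> (I - {e1}) + \<nu> (insert e1 K)"
        unfolding g_def circ_def D_def using e1 e1I e1K by simp
      have c1: "card (insert e1 K) = r" using cins e1K by simp
      have c2: "card (I - {e1}) = r" using I e1I fI by simp
      have "insert e1 K \<subseteq> E" using K e1 by auto
      moreover have "I - {e1} \<subseteq> E" using I by auto
      moreover have "e1 \<in> insert e1 K - (I - {e1})" by auto
      ultimately obtain j where j: "j \<in> (I - {e1}) - insert e1 K"
        "\<nu> (insert j (insert e1 K - {e1})) + \<nu> (insert e1 ((I - {e1}) - {j})) \<le> \<nu> (insert e1 K) + \<nu> (I - {e1})"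
        using vm c1 c2 unfolding valuated_matroid_def by blast
      have s1: "insert e1 K - {e1} = K" using e1K by auto
      have s2: "insert e1 ((I - {e1}) - {j}) = I - {j}" using j e1I by auto
      have jE: "j \<in> E" using j I by auto
      have gj: "g j = \<nu> (I - {j}) + \<nu> (insert j K)"
        unfolding g_def circ_def D_def using j jE by auto
      have "g j \<le> g e1" using j(2) unfolding s1 s2 gj ge1 by (simp add: ac_simps)
      then have "g j = g e1" using e1min jE by (metis order_antisym)
      then show ?thesis unfolding min_twice_def using e1 e1min jE j
        by (intro bexI[of _ e1] bexI[of _ j]) auto
    qed
  }
  ultimately show ?thesis unfolding trop_def D_def[symmetric] by blast
qed

lemma sub1: "B \<subseteq> {0..n} \<Longrightarrow> 0 \<notin> B \<Longrightarrow> B \<subseteq> {1..(n::nat)}"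
  by (auto simp: subset_iff) (metis Suc_leI atLeastAtMost_iff gr0I)+

lemma pointed_vm:
  assumes vm: "valuated_matroid {1..n} r \<mu>"
  shows "valuated_matroid {0..n} r (pointed \<mu>)"
proof -
  have fin: "finite {0..n::nat}" by simp
  have t: "\<forall>B. B \<subseteq> {0..n} \<and> card B = r \<longrightarrow> pointed \<mu> B \<in> tropT"
  proof (intro allI impI)
    fix B assume B: "B \<subseteq> {0..n} \<and> card B = r"
    show "pointed \<mu> B \<in> tropT"
    proof (cases "0 \<in> B")
      case True then show ?thesis by (simp add: pointed_def tropT_def)
    next
      case False
      then have "B \<subseteq> {1..n}" using B sub1 by blast
      then show ?thesis using vm B False unfolding valuated_matroid_def pointed_def by auto
    qed
  qed
  obtain B0 where B0: "B0 \<subseteq> {1..n}" "card B0 = r" "\<mu> B0 \<noteq> \<infinity>" using vm unfolding valuated_matroid_def by auto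
  have b: "\<exists>B. B \<subseteq> {0..n} \<and> card B = r \<and> pointed \<mu> B \<noteq> \<infinity>"
    using B0 by (intro exI[of _ B0]) (auto simp: pointed_def)
  have ex: "\<forall>I J i. I \<subseteq> {0..n} \<and> card I = r \<and> J \<subseteq> {0..n} \<and> card J = r \<and> i \<in> I - J \<longrightarrow>
        (\<exists>j \<in> J - I. pointed \<mu> (insert j (I - {i})) + pointed \<mu> (insert i (J - {j})) \<le> pointed \<mu> I + pointed \<mu> J)"
  proof (intro allI impI)
    fix I J i assume H: "I \<subseteq> {0..n} \<and> card I = r \<and> J \<subseteq> {0..n} \<and> card J = r \<and> i \<in> I - J"
    have fI: "finite I" "finite J" using H finite_subset by auto
    have "J - I \<noteq> {}"
    proof
      assume "J - I = {}"
      then have "J \<subseteq> I" by auto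
      then have "J = I" using H fI by (metis card_subset_eq)
      then show False using H by auto
    qed
    then obtain j0 where j0: "j0 \<in> J - I" by auto
    show "\<exists>j \<in> J - I. pointed \<mu> (insert j (I - {i})) + pointed \<mu> (insert i (J - {j})) \<le> pointed \<mu> I + pointed \<mu> J"
    proof (cases "0 \<in> I \<or> 0 \<in> J")
      case True
      then have "pointed \<mu> I + pointed \<mu> J = \<infinity>" by (auto simp: pointed_def)
      then show ?thesis using j0 by auto
    next
      case False
      then have "I \<subseteq> {1..n}" "J \<subseteq> {1..n}" using H sub1 by blast+
      then obtain j where j: "j \<in> J - I" "\<mu> (insert j (I - {i})) + \<mu> (insert i (J - {j})) \<le> \<mu> I + \<mu> J"
        using vm H unfolding valuated_matroid_def by blast
      have "j \<in> J" "i \<in> I" using j(1) H by simp_all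
      then have "j \<noteq> 0" "i \<noteq> 0" using False by metis+
      then have "0 \<notin> insert j (I - {i})" "0 \<notin> insert i (J - {j})" using False by auto
      then show ?thesis using j False by (intro bexI[of _ j]) (auto simp: pointed_def)
    qed
  qed
  show ?thesis unfolding valuated_matroid_def using fin t b ex by blast
qed

locale pbs =
  fixes \<mu> :: "nat set \<Rightarrow> ereal" and n r :: nat and f :: "nat \<Rightarrow> nat \<times> ereal"
  assumes vm: "valuated_matroid {1..n} r \<mu>"
    and frange: "\<And>i. i \<in> {0..n} \<Longrightarrow> fst (f i) \<in> {0..n} \<and> snd (f i) \<in> tropT"
begin

abbreviation "P \<equiv> pointed \<mu>"
abbreviation "S \<equiv> pb_S n f"
abbreviation "k \<equiv> pb_rank n r \<mu> f"
abbreviation "\<rho> \<equiv> restr {0..n} r (pointed \<mu>) (pb_S n f)"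
abbreviation "\<nu> \<equiv> pullback n r \<mu> f"
abbreviation "JJ \<equiv> {J. J \<subseteq> {0..n} - pb_S n f \<and> card J = r - pb_rank n r \<mu> f}"

lemma Pvm: "valuated_matroid {0..n} r P" using pointed_vm[OF vm] .

lemma S_sub: "S \<subseteq> {0..n}" using frange unfolding pb_S_def by auto

lemma finS: "finite S" using S_sub finite_subset by auto

lemma P_tropT: "Y \<subseteq> {0..n} \<Longrightarrow> card Y = r \<Longrightarrow> P Y \<in> tropT"
  using Pvm unfolding valuated_matroid_def by auto

lemma P0: "0 \<in> Y \<Longrightarrow> P Y = \<infinity>" by (simp add: pointed_def)

definition CS where "CS = {card A | A. A \<subseteq> S \<and> (\<exists>B. B \<subseteq> {0..n} \<and> card B = r \<and> P B \<noteq> \<infinity> \<and> A \<subseteq> B)}"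

lemma k_def': "k = Max CS" unfolding CS_def pb_rank_def rank_of_def by simp

lemma CS_fin: "finite CS"
proof -
  have "CS \<subseteq> card ` Pow S" unfolding CS_def by auto
  then show ?thesis using finS finite_subset by blast
qed

lemma CS_ne: "CS \<noteq> {}"
proof -
  obtain B where "B \<subseteq> {0..n}" "card B = r" "P B \<noteq> \<infinity>" using Pvm unfolding valuated_matroid_def by auto
  then have "card {} \<in> CS" unfolding CS_def by (intro CollectI exI[of _ "{}"]) auto
  then show ?thesis by auto
qed

lemma rank_le:
  assumes "Y \<subseteq> {0..n}" "card Y = r" "P Y \<noteq> \<infinity>"
  shows "card (Y \<inter> S) \<le> k"
proof -
  have "Y \<inter> S \<subseteq> S \<and> (\<exists>B. B \<subseteq> {0..n} \<and> card B = r \<and> P B \<noteq> \<infinity> \<and> Y \<inter> S \<subseteq> B)"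
    using assms by blast
  then have "card (Y \<inter> S) \<in> CS" unfolding CS_def by (intro CollectI exI[of _ "Y \<inter> S"]) simp
  then have "card (Y \<inter> S) \<le> Max CS" by (rule Max_ge[OF CS_fin])
  then show ?thesis using k_def' by metis
qed

lemma rank_wit: "\<exists>X. X \<subseteq> S \<and> card X = k \<and> (\<exists>B. B \<subseteq> {0..n} \<and> card B = r \<and> P B \<noteq> \<infinity> \<and> X \<subseteq> B)"
proof -
  have "Max CS \<in> CS" by (rule Max_in[OF CS_fin CS_ne])
  then have "k \<in> CS" using k_def' by metis
  then obtain A where A: "k = card A" "A \<subseteq> S" "\<exists>B. B \<subseteq> {0..n} \<and> card B = r \<and> P B \<noteq> \<infinity> \<and> A \<subseteq> B"
    unfolding CS_def by auto
  then show ?thesis by (intro exI[of _ A]) simp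
qed

lemma k_le_r: "k \<le> r"
proof -
  obtain X B where XB: "X \<subseteq> B" "card X = k" "B \<subseteq> {0..n}" "card B = r" using rank_wit by blast
  moreover have "finite B" using \<open>B \<subseteq> {0..n}\<close> finite_subset by blast
  ultimately show ?thesis using card_mono[OF \<open>finite B\<close> XB(1)] by simp
qed

lemma JJ_fin: "finite JJ" by (rule finite_subset[of _ "Pow {0..n}"]) auto

lemma rho_def': "\<rho> A = (INF J\<in>JJ. P (A \<union> J))"
  unfolding restr_def pb_rank_def by simp

lemma rho_le: "J \<in> JJ \<Longrightarrow> \<rho> A \<le> P (A \<union> J)"
  unfolding rho_def' by (rule INF_lower)

lemma rho_att:
  assumes "\<rho> A \<noteq> \<infinity>"
  shows "\<exists>J\<in>JJ. \<rho> A = P (A \<union> J)"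
proof -
  have "JJ \<noteq> {}"
  proof
    assume "JJ = {}"
    then have "\<rho> A = \<infinity>" unfolding rho_def' by (simp only: image_empty Inf_empty top_ereal_def)
    then show False using assms by simp
  qed
  then show ?thesis unfolding rho_def' using INF_att[OF JJ_fin] by blast
qed

lemma AJ_card:
  assumes "A \<subseteq> S" "card A = k" "J \<in> JJ"
  shows "card (A \<union> J) = r" "A \<union> J \<subseteq> {0..n}" "A \<inter> J = {}"
proof -
  have fA: "finite A" using assms finS finite_subset by auto
  have fJ: "finite J" using assms by (auto intro: finite_subset)
  show d: "A \<inter> J = {}" using assms by auto
  show "card (A \<union> J) = r" using card_Un_disjoint[OF fA fJ d] assms k_le_r by simp
  show "A \<union> J \<subseteq> {0..n}" using assms S_sub by auto
qed

lemma rho_tropT: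
  assumes "A \<subseteq> S" "card A = k"
  shows "\<rho> A \<noteq> -\<infinity>"
proof (cases "\<rho> A = \<infinity>")
  case False
  then obtain J where J: "J \<in> JJ" "\<rho> A = P (A \<union> J)" using rho_att[of A] by auto
  have "A \<union> J \<subseteq> {0..n}" "card (A \<union> J) = r" using AJ_card(1,2)[OF assms J(1)] by simp_all
  then have "P (A \<union> J) \<in> tropT" by (rule P_tropT)
  then show ?thesis using J(2) unfolding tropT_def by simp
next
  case True
  then show ?thesis by simp
qed

lemma nu_eq: "\<nu> B = (if card ((fst \<circ> f) ` B) < card B then \<infinity> else \<rho> ((fst \<circ> f) ` B) + (\<Sum>i\<in>B. snd (f i)))"
  by (rule pullback_def)

end

lemma mt_cong:
  assumes "min_twice E g" "\<And>d. d \<in> E \<Longrightarrow> g d = g' d"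
  shows "min_twice E g'"
proof -
  obtain e e' where "e \<in> E" "e' \<in> E" "e \<noteq> e'" "g e = g e'" "\<forall>d\<in>E. g e \<le> g d"
    using assms unfolding min_twice_def by blast
  then show ?thesis unfolding min_twice_def using assms(2)
    by (intro bexI[of _ e] bexI[of _ e']) auto
qed

lemma tropT_add: "a \<in> tropT \<Longrightarrow> b \<in> tropT \<Longrightarrow> a + b \<in> tropT"
  unfolding tropT_def by (cases a; cases b) auto

context pbs
begin

definition zh :: "(nat \<Rightarrow> ereal) \<Rightarrow> nat \<Rightarrow> ereal" where
  "zh z = (\<lambda>e\<in>{0..n}. if e = 0 then \<infinity> else z e)"

lemma two0: "1 \<le> n \<Longrightarrow> \<exists>a\<in>{0..n}. \<exists>b\<in>{0..n}. a \<noteq> b"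
  by (intro bexI[of _ 0] bexI[of _ 1]) auto

lemma zh_trop:
  assumes z: "z \<in> trop {1..n} r \<mu>" and n1: "1 \<le> n"
  shows "zh z \<in> trop {0..n} r P"
proof -
  have zm: "z \<in> {1..n} \<rightarrow>\<^sub>E tropT" using z unfolding trop_def by auto
  have "zh z \<in> {0..n} \<rightarrow>\<^sub>E tropT"
  proof
    fix e assume e: "e \<in> {0..n}"
    show "zh z e \<in> tropT"
    proof (cases "e = 0")
      case True then show ?thesis unfolding zh_def tropT_def by simp
    next
      case False
      then have "e \<in> {1..n}" using e by auto
      then show ?thesis using zm False e unfolding zh_def by auto
    qed
  qed (simp add: zh_def)
  moreover
  { fix I assume I: "I \<subseteq> {0..n}" "card I = Suc r" "\<exists>e\<in>{0..n}. circ P I e \<noteq> \<infinity>"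
    have "min_twice {0..n} (\<lambda>e. circ P I e + zh z e)"
    proof (cases "0 \<in> I")
      case True
      have "\<forall>d\<in>{0..n}. circ P I d + zh z d = \<infinity>"
      proof
        fix d assume d: "d \<in> {0..n}"
        show "circ P I d + zh z d = \<infinity>"
        proof (cases "d = 0")
          case True then show ?thesis unfolding zh_def by simp
        next
          case False
          then have "0 \<in> I - {d}" using \<open>0 \<in> I\<close> by auto
          then show ?thesis unfolding circ_def by (simp add: P0)
        qed
      qed
      then show ?thesis using two0[OF n1] by (intro min_twice_inf) auto
    next
      case False
      have I1: "I \<subseteq> {1..n}" using I(1) False sub1 by blast
      have ceq: "\<And>e. circ P I e = circ \<mu> I e"
        unfolding circ_def pointed_def using False by auto
      obtain e0 where e0: "e0 \<in> {0..n}" "circ P I e0 \<noteq> \<infinity>" using I(3) by blast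
      then have "e0 \<in> I" unfolding circ_def by (auto split: if_splits)
      then have "e0 \<in> {1..n}" using I1 by auto
      then have "I \<subseteq> {1..n} \<and> card I = Suc r \<and> (\<exists>e\<in>{1..n}. circ \<mu> I e \<noteq> \<infinity>)"
        using I1 I(2) e0 ceq by auto
      then have "min_twice {1..n} (\<lambda>e. circ \<mu> I e + z e)" using z unfolding trop_def by blast
      then obtain e1 e2 where ee: "e1 \<in> {1..n}" "e2 \<in> {1..n}" "e1 \<noteq> e2"
        "circ \<mu> I e1 + z e1 = circ \<mu> I e2 + z e2" "\<forall>d\<in>{1..n}. circ \<mu> I e1 + z e1 \<le> circ \<mu> I d + z d"
        unfolding min_twice_def by blast
      have zhe: "\<And>d. d \<in> {1..n} \<Longrightarrow> zh z d = z d" unfolding zh_def by auto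
      have c0: "circ P I 0 + zh z 0 = \<infinity>" unfolding zh_def by simp
      have "\<forall>d\<in>{0..n}. circ P I e1 + zh z e1 \<le> circ P I d + zh z d"
      proof
        fix d assume d: "d \<in> {0..n}"
        show "circ P I e1 + zh z e1 \<le> circ P I d + zh z d"
        proof (cases "d = 0")
          case True then show ?thesis using c0 by (metis ereal_less_eq(1))
        next
          case False
          then have "d \<in> {1..n}" using d by auto
          then show ?thesis using ee(5) zhe ee(1) ceq by simp
        qed
      qed
      then show ?thesis unfolding min_twice_def using ee zhe ceq
        by (intro bexI[of _ e1] bexI[of _ e2]) auto
    qed
  }
  ultimately show ?thesis unfolding trop_def by blast
qed

lemma rhoC:
  assumes CS: "C \<subseteq> S" and cC: "card C = Suc k" and n1: "1 \<le> n" and zt: "zt \<in> trop {0..n} r P"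
  shows "min_twice {0..n} (\<lambda>d. if d \<in> C then \<rho> (C - {d}) + zt d else \<infinity>)"
proof (cases "JJ = {}")
  case True
  have "\<forall>d\<in>{0..n}. (if d \<in> C then \<rho> (C - {d}) + zt d else \<infinity>) = \<infinity>"
  proof
    fix d
    have "\<rho> A = \<infinity>" for A
    proof -
      have "\<rho> A = (INF J\<in>JJ. P (A \<union> J))" by (rule rho_def')
      also have "\<dots> = \<infinity>" unfolding True by (simp add: top_ereal_def)
      finally show ?thesis .
    qed
    then show "(if d \<in> C then \<rho> (C - {d}) + zt d else \<infinity>) = \<infinity>" by simp
  qed
  then show ?thesis using two0[OF n1] by (intro min_twice_inf) auto
next
  case False
  note JJne = False
  define H where "H = (\<lambda>J d. circ P (C \<union> J) d + zt d)"
  have fC: "finite C" using CS finS finite_subset by auto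
  have mtH: "\<forall>J\<in>JJ. min_twice {0..n} (H J)"
  proof
    fix J assume J: "J \<in> JJ"
    have d: "C \<inter> J = {}" using J CS by auto
    have fJ: "finite J" using J by (auto intro: finite_subset)
    have "card (C \<union> J) = Suc r" using card_Un_disjoint[OF fC fJ d] J cC k_le_r by simp
    moreover have "C \<union> J \<subseteq> {0..n}" using S_sub J CS by auto
    ultimately show "min_twice {0..n} (H J)" unfolding H_def using trop_all[OF zt] two0[OF n1] by blast
  qed
  have mt: "min_twice {0..n} (\<lambda>d. INF J\<in>JJ. H J d)"
    by (rule mt_family[OF JJ_fin JJne _ mtH]) simp
  have eq: "(INF J\<in>JJ. H J d) = (if d \<in> C then \<rho> (C - {d}) + zt d else \<infinity>)" if d: "d \<in> {0..n}" for d
  proof -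
    have HJ: "H J d = (if d \<in> C then P ((C - {d}) \<union> J) + zt d else \<infinity>)" if J: "J \<in> JJ" for J
    proof (cases "d \<in> C")
      case True
      then have "C \<union> J - {d} = (C - {d}) \<union> J" using J CS by auto
      then show ?thesis using True unfolding H_def circ_def by simp
    next
      case False
      note dC = False
      show ?thesis
      proof (cases "d \<in> J")
        case True
        have fJ: "finite J" using J by (auto intro: finite_subset)
        have dd: "C \<inter> J = {}" using J CS by auto
        have cU: "card (C \<union> J) = Suc r" using card_Un_disjoint[OF fC fJ dd] J cC k_le_r by simp
        have "P (C \<union> J - {d}) = \<infinity>"
        proof (rule ccontr)
          assume nI: "P (C \<union> J - {d}) \<noteq> \<infinity>"
          have Ysub: "C \<union> J - {d} \<subseteq> {0..n}" using S_sub J CS by auto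
          have "card (C \<union> J - {d}) = r" using cU True fC fJ by (simp add: card_Diff_singleton)
          then have "card ((C \<union> J - {d}) \<inter> S) \<le> k" using rank_le[OF Ysub _ nI] by simp
          moreover have "C \<subseteq> (C \<union> J - {d}) \<inter> S" using dC CS by auto
          then have "card C \<le> card ((C \<union> J - {d}) \<inter> S)" by (rule card_mono[rotated]) (simp add: finS)
          ultimately show False using cC by simp
        qed
        then show ?thesis using dC True unfolding H_def circ_def by simp
      next
        case False
        then show ?thesis unfolding H_def circ_def using dC by simp
      qed
    qed
    show ?thesis
    proof (cases "d \<in> C")
      case True
      have "(INF J\<in>JJ. H J d) = (INF J\<in>JJ. zt d + P ((C - {d}) \<union> J))"
        using HJ True by (intro INF_cong) (auto simp: ac_simps)
      also have "\<dots> = zt d + (INF J\<in>JJ. P ((C - {d}) \<union> J))"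
        using add_INF_ereal[OF JJ_fin JJne, of "zt d"] by simp
      also have "\<dots> = \<rho> (C - {d}) + zt d" by (simp add: rho_def' ac_simps)
      finally show ?thesis using True by simp
    next
      case False
      then have "(INF J\<in>JJ. H J d) = (INF J\<in>JJ. \<infinity>)" using HJ by (intro INF_cong) auto
      also have "\<dots> = \<infinity>" using JJne by simp
      finally show ?thesis using False by simp
    qed
  qed
  show ?thesis by (rule mt_cong[OF mt eq])
qed

end

context pbs
begin

lemma dir_back:
  assumes z: "z \<in> trop {1..n} r \<mu>" and n1: "1 \<le> n"
  shows "(\<lambda>i\<in>{0..n}. snd (f i) + zh z (fst (f i))) \<in> trop {0..n} k \<nu>"
proof -
  define x where "x = (\<lambda>i\<in>{0..n}. snd (f i) + zh z (fst (f i)))"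
  have zt: "zh z \<in> trop {0..n} r P" using zh_trop[OF z n1] .
  have ztT: "zh z e \<in> tropT" if "e \<in> {0..n}" for e using zt that unfolding trop_def by auto
  have xm: "x \<in> {0..n} \<rightarrow>\<^sub>E tropT"
  proof
    fix i assume i: "i \<in> {0..n}"
    then show "x i \<in> tropT" unfolding x_def using frange[OF i] ztT by (auto intro: tropT_add)
  qed (simp add: x_def)
  have main: "min_twice {0..n} (\<lambda>e. circ \<nu> I e + x e)" if I: "I \<subseteq> {0..n}" "card I = Suc k" for I
  proof -
    define V where "V = (\<lambda>e. circ \<nu> I e + x e)"
    have fI: "finite I" using I finite_subset by auto
    have Vo: "V e = \<infinity>" if "e \<notin> I" for e unfolding V_def circ_def using that by simp
    have xe: "x e = snd (f e) + zh z (fst (f e))" if "e \<in> I" for e using that I unfolding x_def by auto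
    have "min_twice {0..n} V"
    proof (cases "inj_on (fst \<circ> f) I")
      case True
      note inj = True
      define C where "C = (fst \<circ> f) ` I"
      have CS: "C \<subseteq> S" unfolding C_def pb_S_def using I by auto
      have cC: "card C = Suc k" using card_image[OF inj] I C_def by simp
      define W where "W = (\<Sum>i\<in>I. snd (f i))"
      have Ve: "V e = (\<rho> (C - {fst (f e)}) + zh z (fst (f e))) + W" if e: "e \<in> I" for e
      proof -
        have inj': "inj_on (fst \<circ> f) (I - {e})" using inj by (rule inj_on_subset) auto
        have img: "(fst \<circ> f) ` (I - {e}) = C - {fst (f e)}"
          using inj_on_image_set_diff[OF inj, of I "{e}"] e C_def by auto
        have crd: "card ((fst \<circ> f) ` (I - {e})) = card (I - {e})" using card_image[OF inj'] .
        have nu: "\<nu> (I - {e}) = \<rho> (C - {fst (f e)}) + (\<Sum>i\<in>I-{e}. snd (f i))"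
          using nu_eq[of "I - {e}"] crd img by simp
        have sw: "W = snd (f e) + (\<Sum>i\<in>I-{e}. snd (f i))" using sum.remove[OF fI e] W_def by simp
        show ?thesis unfolding V_def circ_def using e nu sw xe[OF e] by (simp add: ac_simps)
      qed
      define G where "G = (\<lambda>d. if d \<in> C then \<rho> (C - {d}) + zh z d else \<infinity>)"
      have mtG: "min_twice {0..n} G" unfolding G_def by (rule rhoC[OF CS cC n1 zt])
      then obtain c1 c2 where c: "c1 \<in> {0..n}" "c2 \<in> {0..n}" "c1 \<noteq> c2" "G c1 = G c2"
        "\<forall>d\<in>{0..n}. G c1 \<le> G d" unfolding min_twice_def by blast
      have fC: "fst (f d) \<in> C" "fst (f d) \<in> {0..n}" if "d \<in> I" for d
        using that C_def I frange[of d] by auto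
      have VG: "V d = G (fst (f d)) + W" if "d \<in> I" for d
        using Ve[OF that] fC[OF that] unfolding G_def by simp
      show ?thesis
      proof (cases "G c1 = \<infinity>")
        case True
        have "\<forall>d\<in>{0..n}. V d = \<infinity>"
        proof
          fix d assume d: "d \<in> {0..n}"
          show "V d = \<infinity>"
          proof (cases "d \<in> I")
            case True
            have "G (fst (f d)) = \<infinity>" using c(5) \<open>G c1 = \<infinity>\<close> fC[OF True]
              by (metis ereal_infty_less_eq(1))
            then show ?thesis using VG[OF True] by simp
          next
            case False then show ?thesis using Vo by simp
          qed
        qed
        then show ?thesis using two0[OF n1] by (intro min_twice_inf) auto
      next
        case False
        then have "c1 \<in> C" "c2 \<in> C" using c(4) unfolding G_def by (auto split: if_splits)
        then obtain e1 e2 where e: "e1 \<in> I" "fst (f e1) = c1" "e2 \<in> I" "fst (f e2) = c2"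
          unfolding C_def by auto
        have ne: "e1 \<noteq> e2" using e c(3) by auto
        have le: "\<forall>d\<in>{0..n}. V e1 \<le> V d"
        proof
          fix d assume d: "d \<in> {0..n}"
          show "V e1 \<le> V d"
          proof (cases "d \<in> I")
            case True
            have "G c1 \<le> G (fst (f d))" using c(5) fC[OF True] by blast
            then have "G c1 + W \<le> G (fst (f d)) + W" by (rule add_right_mono)
            then show ?thesis using VG[OF True] VG[OF e(1)] e(2) by simp
          next
            case False then show ?thesis using Vo by simp
          qed
        qed
        have "V e1 = V e2" using VG[OF e(1)] VG[OF e(3)] e c(4) by simp
        then show ?thesis unfolding min_twice_def using e ne le I
          by (intro bexI[of _ e1] bexI[of _ e2]) auto
      qed
    next
      case False
      then obtain e1 e2 where e: "e1 \<in> I" "e2 \<in> I" "e1 \<noteq> e2" "fst (f e1) = fst (f e2)"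
        unfolding inj_on_def by auto
      have img1: "(fst \<circ> f) ` (I - {e1}) = (fst \<circ> f) ` I"
      proof
        show "(fst \<circ> f) ` I \<subseteq> (fst \<circ> f) ` (I - {e1})"
        proof
          fix a assume "a \<in> (fst \<circ> f) ` I"
          then obtain b where b: "b \<in> I" "a = fst (f b)" by auto
          show "a \<in> (fst \<circ> f) ` (I - {e1})"
          proof (cases "b = e1")
            case True then show ?thesis using b e by (auto intro: image_eqI[of _ _ e2])
          next
            case False then show ?thesis using b by auto
          qed
        qed
      qed auto
      have img2: "(fst \<circ> f) ` (I - {e2}) = (fst \<circ> f) ` I"
      proof
        show "(fst \<circ> f) ` I \<subseteq> (fst \<circ> f) ` (I - {e2})"
        proof
          fix a assume "a \<in> (fst \<circ> f) ` I"
          then obtain b where b: "b \<in> I" "a = fst (f b)" by auto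
          show "a \<in> (fst \<circ> f) ` (I - {e2})"
          proof (cases "b = e2")
            case True then show ?thesis using b e by (auto intro: image_eqI[of _ _ e1])
          next
            case False then show ?thesis using b by auto
          qed
        qed
      qed auto
      have cd: "card (I - {e1}) = card (I - {e2})" using e fI by simp
      have Vout: "V d = \<infinity>" if d: "d \<in> {0..n}" "d \<noteq> e1" "d \<noteq> e2" for d
      proof (cases "d \<in> I")
        case True
        have "\<not> inj_on (fst \<circ> f) (I - {d})" using e d unfolding inj_on_def by auto
        moreover have "finite (I - {d})" using fI by simp
        ultimately have "card ((fst \<circ> f) ` (I - {d})) \<noteq> card (I - {d})" using inj_on_iff_eq_card by blast
        moreover have "card ((fst \<circ> f) ` (I - {d})) \<le> card (I - {d})" by (rule card_image_le) (simp add: fI)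
        ultimately have "card ((fst \<circ> f) ` (I - {d})) < card (I - {d})" by simp
        then have "\<nu> (I - {d}) = \<infinity>" using nu_eq by simp
        then show ?thesis unfolding V_def circ_def using True by simp
      next
        case False then show ?thesis using Vo by simp
      qed
      have Vi: "V ei = (if card ((fst \<circ> f) ` I) < card (I - {e1}) then \<infinity>
          else \<rho> ((fst \<circ> f) ` I) + (\<Sum>i\<in>I. snd (f i)) + zh z (fst (f e1)))"
        if ei: "ei \<in> I" "(fst \<circ> f) ` (I - {ei}) = (fst \<circ> f) ` I" "card (I - {ei}) = card (I - {e1})"
          "fst (f ei) = fst (f e1)" for ei
      proof -
        have s: "snd (f ei) + (\<Sum>i\<in>I - {ei}. snd (f i)) = (\<Sum>i\<in>I. snd (f i))"
          using sum.remove[OF fI ei(1), of "\<lambda>i. snd (f i)"] by simp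
        have "V ei = \<nu> (I - {ei}) + (snd (f ei) + zh z (fst (f ei)))"
          unfolding V_def circ_def using ei(1) xe[OF ei(1)] by simp
        also have "\<dots> = (if card ((fst \<circ> f) ` I) < card (I - {e1}) then \<infinity>
          else \<rho> ((fst \<circ> f) ` I) + (\<Sum>i\<in>I - {ei}. snd (f i))) + (snd (f ei) + zh z (fst (f e1)))"
          using nu_eq[of "I - {ei}"] ei by simp
        also have "\<dots> = (if card ((fst \<circ> f) ` I) < card (I - {e1}) then \<infinity>
          else \<rho> ((fst \<circ> f) ` I) + (\<Sum>i\<in>I. snd (f i)) + zh z (fst (f e1)))"
          by (simp add: s[symmetric] ac_simps)
        finally show ?thesis .
      qed
      have "V e1 = V e2" using Vi[of e1] Vi[of e2] e img1 img2 cd by simp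
      moreover have "\<forall>d\<in>{0..n}. V e1 \<le> V d"
      proof
        fix d assume "d \<in> {0..n}"
        then show "V e1 \<le> V d" using Vout[of d] \<open>V e1 = V e2\<close> by (cases "d = e1 \<or> d = e2") auto
      qed
      ultimately show ?thesis unfolding min_twice_def using e I
        by (intro bexI[of _ e1] bexI[of _ e2]) auto
    qed
    then show ?thesis unfolding V_def .
  qed
  show ?thesis using xm main unfolding trop_def x_def[symmetric] by blast
qed

end

lemma sum_tropT: "(\<And>i. i \<in> B \<Longrightarrow> g i \<in> tropT) \<Longrightarrow> sum g B \<in> tropT"
proof (induction B rule: infinite_finite_induct)
  case (infinite A) then show ?case by (simp add: tropT_def)
next
  case empty then show ?case by (simp add: tropT_def)
next
  case (insert x F) then show ?case by (simp add: tropT_add)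
qed

lemma card_swap: "finite B \<Longrightarrow> b \<in> B \<Longrightarrow> a \<notin> B \<Longrightarrow> card (insert a (B - {b})) = card B"
proof -
  assume a: "finite B" "b \<in> B" "a \<notin> B"
  then have "card B > 0" using card_gt_0_iff by blast
  then show ?thesis using a by (simp add: card_Diff_singleton)
qed

lemma sum_inf: "finite B \<Longrightarrow> i \<in> B \<Longrightarrow> g i = (\<infinity>::ereal) \<Longrightarrow> sum g B = \<infinity>"
  using sum.remove[of B i g] by simp

context pbs
begin

lemma nu_notminf:
  assumes "B \<subseteq> {0..n}" "card B = k"
  shows "\<nu> B \<noteq> -\<infinity>"
proof (cases "card ((fst \<circ> f) ` B) < card B")
  case True then show ?thesis using nu_eq by simp
next
  case False
  have fB: "finite B" using assms finite_subset by auto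
  have "card ((fst \<circ> f) ` B) = k" using False card_image_le[OF fB, of "fst \<circ> f"] assms by simp
  moreover have "(fst \<circ> f) ` B \<subseteq> S" using assms unfolding pb_S_def by auto
  ultimately have "\<rho> ((fst \<circ> f) ` B) \<noteq> -\<infinity>" using rho_tropT by blast
  moreover have "(\<Sum>i\<in>B. snd (f i)) \<in> tropT" using assms frange by (intro sum_tropT) auto
  ultimately have "\<rho> ((fst \<circ> f) ` B) + (\<Sum>i\<in>B. snd (f i)) \<in> tropT"
    by (intro tropT_add) (auto simp: tropT_def)
  then show ?thesis using False nu_eq[of B] by (simp add: tropT_def)
qed

lemma notinj_inf:
  assumes "finite B" "i \<in> B" "i' \<in> B" "i \<noteq> i'" "fst (f i) = fst (f i')"
  shows "\<nu> B = \<infinity>"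
proof -
  have "\<not> inj_on (fst \<circ> f) B" using assms unfolding inj_on_def by auto
  then have "card ((fst \<circ> f) ` B) \<noteq> card B" using inj_on_iff_eq_card assms(1) by blast
  moreover have "card ((fst \<circ> f) ` B) \<le> card B" by (rule card_image_le) (simp add: assms)
  ultimately show ?thesis using nu_eq by simp
qed

lemma rho_inf0: "0 \<in> A \<Longrightarrow> \<rho> A = \<infinity>"
proof -
  assume "0 \<in> A"
  then have "\<forall>J\<in>JJ. P (A \<union> J) = \<infinity>" by (simp add: P0)
  then have "\<infinity> \<le> \<rho> A" unfolding rho_def' by (intro INF_greatest) simp
  then show ?thesis by (simp add: ereal_infty_less_eq(1))
qed

definition loopy :: "nat \<Rightarrow> bool" where
  "loopy i \<longleftrightarrow> (\<forall>B. B \<subseteq> {0..n} \<and> card B = k \<and> i \<in> B \<longrightarrow> \<nu> B = \<infinity>)"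

definition live :: "nat \<Rightarrow> bool" where
  "live i \<longleftrightarrow> i \<in> {0..n} \<and> fst (f i) \<noteq> 0 \<and> snd (f i) \<noteq> \<infinity>"

lemma dead_loopy:
  assumes "i \<in> {0..n}" "\<not> live i"
  shows "loopy i"
  unfolding loopy_def
proof (intro allI impI)
  fix B assume B: "B \<subseteq> {0..n} \<and> card B = k \<and> i \<in> B"
  have fB: "finite B" using B finite_subset by auto
  show "\<nu> B = \<infinity>"
  proof (cases "fst (f i) = 0")
    case True
    then have "0 \<in> (fst \<circ> f) ` B" using B by force
    then show ?thesis using nu_eq[of B] rho_inf0 by simp
  next
    case False
    then have "snd (f i) = \<infinity>" using assms unfolding live_def by auto
    then have "(\<Sum>i\<in>B. snd (f i)) = \<infinity>" using sum_inf[OF fB, of i "\<lambda>i. snd (f i)"] B by simp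
    then show ?thesis using nu_eq[of B] by simp
  qed
qed

lemma swap:
  assumes fB: "finite B" and i: "i \<in> B" and i': "i' \<notin> B" and ph: "fst (f i) = fst (f i')"
  shows "\<nu> (insert i' (B - {i})) + snd (f i) = \<nu> B + snd (f i')"
proof -
  define B' where "B' = insert i' (B - {i})"
  have img: "(fst \<circ> f) ` B' = (fst \<circ> f) ` B"
  proof
    show "(fst \<circ> f) ` B' \<subseteq> (fst \<circ> f) ` B" unfolding B'_def using i ph by (auto intro: image_eqI[of _ _ i])
    show "(fst \<circ> f) ` B \<subseteq> (fst \<circ> f) ` B'"
    proof
      fix a assume "a \<in> (fst \<circ> f) ` B"
      then obtain b where b: "b \<in> B" "a = fst (f b)" by auto
      show "a \<in> (fst \<circ> f) ` B'"
      proof (cases "b = i")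
        case True then show ?thesis using b ph unfolding B'_def by (auto intro: image_eqI[of _ _ i'])
      next
        case False then show ?thesis using b unfolding B'_def by auto
      qed
    qed
  qed
  have "card B > 0" using fB i card_gt_0_iff by blast
  then have crd: "card B' = card B" unfolding B'_def using fB i i' by (simp add: card_Diff_singleton)
  have s1: "(\<Sum>j\<in>B'. snd (f j)) = snd (f i') + (\<Sum>j\<in>B - {i}. snd (f j))"
    unfolding B'_def using fB i' by simp
  have s2: "(\<Sum>j\<in>B. snd (f j)) = snd (f i) + (\<Sum>j\<in>B - {i}. snd (f j))"
    using sum.remove[OF fB i, of "\<lambda>j. snd (f j)"] by simp
  show ?thesis
  proof (cases "card ((fst \<circ> f) ` B) < card B")
    case True
    then show ?thesis using nu_eq[of B] nu_eq[of B'] img crd unfolding B'_def[symmetric] by simp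
  next
    case False
    then have "\<nu> B' + snd (f i) = \<rho> ((fst \<circ> f) ` B) + (snd (f i') + (\<Sum>j\<in>B - {i}. snd (f j))) + snd (f i)"
      using nu_eq[of B'] img crd s1 by simp
    also have "\<dots> = \<rho> ((fst \<circ> f) ` B) + (snd (f i) + (\<Sum>j\<in>B - {i}. snd (f j))) + snd (f i')"
      by (simp add: ac_simps)
    also have "\<dots> = \<nu> B + snd (f i')" using nu_eq[of B] False s2 by simp
    finally show ?thesis unfolding B'_def .
  qed
qed

end

locale fwd = pbs +
  fixes x :: "nat \<Rightarrow> ereal" and B0 :: "nat set"
  assumes xt: "x \<in> trop {0..n} k (pullback n r \<mu> f)"
    and B0: "B0 \<subseteq> {0..n}" "card B0 = k" "pullback n r \<mu> f B0 \<noteq> \<infinity>"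
    and n1: "1 \<le> n"
begin

lemma xT: "i \<in> {0..n} \<Longrightarrow> x i \<in> tropT" using xt unfolding trop_def by auto

lemma two: "\<exists>a\<in>{0..n}. \<exists>b\<in>{0..n}. a \<noteq> b" using two0[OF n1] .

lemma loop_inf:
  assumes i: "i \<in> {0..n}" "loopy i"
  shows "x i = \<infinity>"
proof -
  have iB: "i \<notin> B0" using B0 i unfolding loopy_def by auto
  define I where "I = insert i B0"
  have fB: "finite B0" using B0 finite_subset by auto
  have I: "I \<subseteq> {0..n}" "card I = Suc k" unfolding I_def using B0 i iB fB by auto
  have Ii: "I - {i} = B0" unfolding I_def using iB by auto
  have oth: "circ \<nu> I d + x d = \<infinity>" if d: "d \<in> {0..n}" "d \<noteq> i" for d
  proof (cases "d \<in> I")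
    case True
    have "I - {d} \<subseteq> {0..n}" "card (I - {d}) = k" "i \<in> I - {d}"
      using I True d fB by (auto simp: I_def card_Diff_singleton)
    then have "\<nu> (I - {d}) = \<infinity>" using i(2) unfolding loopy_def by blast
    then show ?thesis unfolding circ_def using True by simp
  next
    case False then show ?thesis unfolding circ_def by simp
  qed
  have "circ \<nu> I i \<noteq> \<infinity>" unfolding circ_def I_def using Ii B0 I_def by simp
  then have "min_twice {0..n} (\<lambda>e. circ \<nu> I e + x e)" using xt I i unfolding trop_def by blast
  then obtain e e' where ee: "e \<in> {0..n}" "e' \<in> {0..n}" "e \<noteq> e'"
    "circ \<nu> I e + x e = circ \<nu> I e' + x e'" "\<forall>d\<in>{0..n}. circ \<nu> I e + x e \<le> circ \<nu> I d + x d"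
    unfolding min_twice_def by blast
  have "circ \<nu> I e + x e = \<infinity>"
  proof (cases "e = i")
    case True then show ?thesis using ee oth by auto
  next
    case False then show ?thesis using ee oth by auto
  qed
  then have "\<infinity> \<le> circ \<nu> I i + x i" using ee(5) i by metis
  then have "circ \<nu> I i + x i = \<infinity>" by (simp add: ereal_infty_less_eq(1))
  then show ?thesis using \<open>circ \<nu> I i \<noteq> \<infinity>\<close> by simp
qed

lemma live_fin: "live i \<Longrightarrow> snd (f i) \<noteq> \<infinity> \<and> snd (f i) \<noteq> -\<infinity>"
  using frange unfolding live_def tropT_def by auto

lemma consist:
  assumes l: "live i" "live i'" and ph: "fst (f i) = fst (f i')"
  shows "x i' + snd (f i) = x i + snd (f i')"
proof (cases "i = i'")
  case True then show ?thesis by simp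
next
  case False
  note ne = False
  have iE: "i \<in> {0..n}" "i' \<in> {0..n}" using l unfolding live_def by auto
  show ?thesis
  proof (cases "loopy i")
    case True
    have "loopy i'"
      unfolding loopy_def
    proof (intro allI impI)
      fix B' assume B': "B' \<subseteq> {0..n} \<and> card B' = k \<and> i' \<in> B'"
      have fB': "finite B'" using B' finite_subset by auto
      show "\<nu> B' = \<infinity>"
      proof (cases "i \<in> B'")
        case True then show ?thesis using notinj_inf[OF fB' True _ ne ph] B' by simp
      next
        case False
        have sw: "\<nu> (insert i (B' - {i'})) + snd (f i') = \<nu> B' + snd (f i)"
          using swap[OF fB' _ False] B' ph by simp
        have "insert i (B' - {i'}) \<subseteq> {0..n}" "card (insert i (B' - {i'})) = k" "i \<in> insert i (B' - {i'})"
          using B' iE False fB' card_swap[OF fB', of i' i] by auto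
        then have "\<nu> (insert i (B' - {i'})) = \<infinity>" using True unfolding loopy_def by blast
        then have "\<nu> B' + snd (f i) = \<infinity>" using sw by simp
        then show ?thesis using live_fin[OF l(1)] by simp
      qed
    qed
    then show ?thesis using loop_inf iE True by simp
  next
    case False
    then obtain B where B: "B \<subseteq> {0..n}" "card B = k" "i \<in> B" "\<nu> B \<noteq> \<infinity>"
      unfolding loopy_def by blast
    have fB: "finite B" using B finite_subset by auto
    have i'B: "i' \<notin> B" using notinj_inf[OF fB B(3) _ ne ph] B(4) by auto
    define I where "I = insert i' B"
    have I: "I \<subseteq> {0..n}" "card I = Suc k" unfolding I_def using B iE i'B fB by auto
    have Ii': "I - {i'} = B" unfolding I_def using i'B by auto
    have Ii: "I - {i} = insert i' (B - {i})" unfolding I_def using ne by auto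
    have sw: "\<nu> (insert i' (B - {i})) + snd (f i) = \<nu> B + snd (f i')"
      by (rule swap[OF fB B(3) i'B ph])
    define V where "V = (\<lambda>e. circ \<nu> I e + x e)"
    have oth: "V d = \<infinity>" if d: "d \<in> {0..n}" "d \<noteq> i" "d \<noteq> i'" for d
    proof (cases "d \<in> I")
      case True
      have "finite (I - {d})" using fB I_def by simp
      then have "\<nu> (I - {d}) = \<infinity>" using notinj_inf[of "I - {d}" i i'] d ph ne B(3) I_def by auto
      then show ?thesis unfolding V_def circ_def using True by simp
    next
      case False then show ?thesis unfolding V_def circ_def by simp
    qed
    have "circ \<nu> I i' \<noteq> \<infinity>" unfolding circ_def using Ii' B(4) I_def by simp
    then have "min_twice {0..n} V" using xt I iE unfolding trop_def V_def by blast
    then obtain e e' where ee: "e \<in> {0..n}" "e' \<in> {0..n}" "e \<noteq> e'" "V e = V e'" "\<forall>d\<in>{0..n}. V e \<le> V d"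
      unfolding min_twice_def by blast
    have iI: "i \<in> I" "i' \<in> I" using B(3) I_def by auto
    have Vi: "V i = \<nu> (insert i' (B - {i})) + x i" unfolding V_def circ_def using Ii iI by simp
    have Vi': "V i' = \<nu> B + x i'" unfolding V_def circ_def using Ii' iI by simp
    have eq: "V i = V i'"
    proof (cases "V e = \<infinity>")
      case True
      then have "V i = \<infinity>" "V i' = \<infinity>" using ee(5) iE by (metis ereal_infty_less_eq(1))+
      then show ?thesis by simp
    next
      case False
      then have "e \<in> {i, i'}" "e' \<in> {i, i'}" using oth ee by (metis insertCI)+
      then show ?thesis using ee(3,4) by auto
    qed
    have nB: "\<nu> B \<noteq> -\<infinity>" using nu_notminf B by simp
    have "\<nu> B + (x i' + snd (f i)) = (\<nu> B + x i') + snd (f i)" by (simp add: ac_simps)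
    also have "\<dots> = (\<nu> (insert i' (B - {i})) + x i) + snd (f i)" using eq Vi Vi' by simp
    also have "\<dots> = (\<nu> (insert i' (B - {i})) + snd (f i)) + x i" by (simp add: ac_simps)
    also have "\<dots> = \<nu> B + (x i + snd (f i'))" using sw by (simp add: ac_simps)
    finally show ?thesis using ereal_add_cancel_left[OF nB] B(4) by simp
  qed
qed

end

context fwd
begin

definition sig :: "nat \<Rightarrow> nat" where "sig c = (SOME i. live i \<and> fst (f i) = c)"
definition S' :: "nat set" where "S' = (\<lambda>i. fst (f i)) ` Collect live"
definition z :: "nat \<Rightarrow> ereal" where "z c = x (sig c) - snd (f (sig c))"

lemma sig: "c \<in> S' \<Longrightarrow> live (sig c) \<and> fst (f (sig c)) = c"
  unfolding sig_def S'_def by (rule someI_ex) auto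

lemma S'_sub: "S' \<subseteq> {1..n}" "S' \<subseteq> S"
proof -
  show "S' \<subseteq> {1..n}"
  proof
    fix c assume "c \<in> S'"
    then obtain i where i: "live i" "c = fst (f i)" unfolding S'_def by auto
    then have "c \<in> {0..n}" "c \<noteq> 0" using frange[of i] unfolding live_def by auto
    then show "c \<in> {1..n}" by auto
  qed
  show "S' \<subseteq> S" unfolding S'_def pb_S_def live_def by auto
qed

lemma finS': "finite S'" using S'_sub finite_subset by blast

lemma x_eq: assumes l: "live i" shows "x i = snd (f i) + z (fst (f i))"
proof -
  define i' where "i' = sig (fst (f i))"
  have "fst (f i) \<in> S'" unfolding S'_def using l by auto
  then have l': "live i'" "fst (f i') = fst (f i)" using sig unfolding i'_def by auto
  have c: "x i + snd (f i') = x i' + snd (f i)" using consist[OF l' (1) l] l'(2) by simp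
  obtain a where a: "snd (f i) = ereal a" using live_fin[OF l] by (cases "snd (f i)") auto
  obtain b where b: "snd (f i') = ereal b" using live_fin[OF l'(1)] by (cases "snd (f i')") auto
  have xi: "x i \<noteq> -\<infinity>" "x i' \<noteq> -\<infinity>" using xT l l' unfolding live_def tropT_def by auto
  have zz: "z (fst (f i)) = x i' - ereal b" unfolding z_def i'_def[symmetric] using b by simp
  show ?thesis using c xi unfolding zz a b by (cases "x i"; cases "x i'") auto
qed

lemma zT: "c \<in> S' \<Longrightarrow> z c \<noteq> -\<infinity>"
proof -
  assume c: "c \<in> S'"
  then have l: "live (sig c)" "fst (f (sig c)) = c" using sig by auto
  have "x (sig c) \<noteq> -\<infinity>" using xT l unfolding live_def tropT_def by auto
  then show ?thesis using live_fin[OF l(1)] unfolding z_def by (cases "x (sig c)"; cases "snd (f (sig c))") auto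
qed

lemma H:
  assumes C: "C \<subseteq> S'" "card C = Suc k"
  shows "min_twice {0..n} (\<lambda>d. if d \<in> C then \<rho> (C - {d}) + z d else \<infinity>)"
proof -
  define G where "G = (\<lambda>d. if d \<in> C then \<rho> (C - {d}) + z d else \<infinity>)"
  define I where "I = sig ` C"
  have sC: "live (sig c)" "fst (f (sig c)) = c" if "c \<in> C" for c using sig that C by auto
  have injs: "inj_on sig C" unfolding inj_on_def using sC by metis
  have fC: "finite C" using C finS' finite_subset by auto
  have fI: "finite I" unfolding I_def using fC by simp
  have cI: "card I = Suc k" unfolding I_def using card_image[OF injs] C by simp
  have IE: "I \<subseteq> {0..n}" unfolding I_def using sC unfolding live_def by auto
  have imgI: "(fst \<circ> f) ` I = C" unfolding I_def using sC by (auto simp: image_iff)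
  have inj: "inj_on (fst \<circ> f) I" using card_image_le fI cI imgI C
    by (metis eq_card_imp_inj_on)
  define W where "W = (\<Sum>i\<in>I. snd (f i))"
  have Wfin: "W \<noteq> \<infinity>" "W \<noteq> -\<infinity>"
  proof -
    have "W \<in> tropT" unfolding W_def using frange IE by (intro sum_tropT) auto
    moreover have "W \<noteq> \<infinity>"
    proof
      assume "W = \<infinity>"
      then obtain i where "i \<in> I" "snd (f i) = \<infinity>" unfolding W_def using fI
        by (metis (no_types, lifting) sum_Pinfty)
      then show False using sC I_def live_fin by auto
    qed
    ultimately show "W \<noteq> \<infinity>" "W \<noteq> -\<infinity>" unfolding tropT_def by auto
  qed
  define V where "V = (\<lambda>e. circ \<nu> I e + x e)"
  have Vo: "V e = \<infinity>" if "e \<notin> I" for e unfolding V_def circ_def using that by simp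
  have Vc: "V (sig c) = G c + W" if c: "c \<in> C" for c
  proof -
    define e where "e = sig c"
    have e: "e \<in> I" unfolding e_def I_def using c by simp
    have inj': "inj_on (fst \<circ> f) (I - {e})" using inj by (rule inj_on_subset) auto
    have img: "(fst \<circ> f) ` (I - {e}) = C - {c}"
      using inj_on_image_set_diff[OF inj, of I "{e}"] e imgI sC[OF c] e_def by auto
    have crd: "card ((fst \<circ> f) ` (I - {e})) = card (I - {e})" using card_image[OF inj'] .
    have nu: "\<nu> (I - {e}) = \<rho> (C - {c}) + (\<Sum>i\<in>I-{e}. snd (f i))"
      using nu_eq[of "I - {e}"] crd img by simp
    have sw: "W = snd (f e) + (\<Sum>i\<in>I-{e}. snd (f i))"
      using sum.remove[OF fI e, of "\<lambda>i. snd (f i)"] W_def by simp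
    have xe: "x e = snd (f e) + z c" using x_eq[of e] sC[OF c] e_def by simp
    have "V e = \<rho> (C - {c}) + (\<Sum>i\<in>I-{e}. snd (f i)) + (snd (f e) + z c)"
      unfolding V_def circ_def using e nu xe by simp
    also have "\<dots> = (\<rho> (C - {c}) + z c) + W" unfolding sw by (simp add: ac_simps)
    finally show ?thesis unfolding e_def G_def using c by simp
  qed
  have "min_twice {0..n} V" unfolding V_def by (rule trop_all[OF xt IE cI two])
  then obtain e1 e2 where ee: "e1 \<in> {0..n}" "e2 \<in> {0..n}" "e1 \<noteq> e2" "V e1 = V e2" "\<forall>d\<in>{0..n}. V e1 \<le> V d"
    unfolding min_twice_def by blast
  have CE: "C \<subseteq> {0..n}" using C S'_sub by auto
  have "min_twice {0..n} G"
  proof (cases "V e1 = \<infinity>")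
    case True
    have "\<forall>d\<in>{0..n}. G d = \<infinity>"
    proof
      fix d assume d: "d \<in> {0..n}"
      show "G d = \<infinity>"
      proof (cases "d \<in> C")
        case True
        have "sig d \<in> {0..n}" using IE I_def True by auto
        then have "V (sig d) = \<infinity>" using ee(5) \<open>V e1 = \<infinity>\<close> by (metis ereal_infty_less_eq(1))
        then show ?thesis using Vc[OF True] Wfin by simp
      next
        case False then show ?thesis unfolding G_def by simp
      qed
    qed
    then show ?thesis by (rule min_twice_inf[OF two])
  next
    case False
    then have "e1 \<in> I" "e2 \<in> I" using Vo ee(4) by metis+
    then obtain c1 c2 where c: "c1 \<in> C" "e1 = sig c1" "c2 \<in> C" "e2 = sig c2" unfolding I_def by auto
    have "c1 \<noteq> c2" using c ee(3) by auto
    have Gc: "G c1 = G c2" using Vc[OF c(1)] Vc[OF c(3)] ee(4) c ereal_add_cancel_right[OF Wfin(2)] Wfin(1) by simp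
    have "\<forall>d\<in>{0..n}. G c1 \<le> G d"
    proof
      fix d assume d: "d \<in> {0..n}"
      show "G c1 \<le> G d"
      proof (cases "d \<in> C")
        case True
        have "sig d \<in> {0..n}" using IE I_def True by auto
        then have "G c1 + W \<le> G d + W" using ee(5) Vc[OF True] Vc[OF c(1)] c(2) by metis
        then show ?thesis using ereal_add_le_add_iff2[of "G c1" W "G d"] Wfin by simp
      next
        case False then show ?thesis unfolding G_def by simp
      qed
    qed
    then show ?thesis unfolding min_twice_def using Gc \<open>c1 \<noteq> c2\<close> c CE
      by (intro bexI[of _ c1] bexI[of _ c2]) auto
  qed
  then show ?thesis unfolding G_def .
qed

end

lemma trop_min1:
  assumes "finite L" "L \<noteq> {}" "finite E" "\<forall>l\<in>L. v l \<in> trop E r \<nu>" "1 \<le> r"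
  shows "(\<lambda>d\<in>E. INF l\<in>L. v l d) \<in> trop E r \<nu>"
proof -
  have "(\<lambda>d\<in>E. INF l\<in>L. v l d) \<in> E \<rightarrow>\<^sub>E tropT"
  proof
    fix d assume d: "d \<in> E"
    obtain l0 where "l0 \<in> L" "(INF l\<in>L. v l d) = v l0 d" using INF_att[OF assms(1,2)] by blast
    moreover have "v l0 d \<in> tropT" using assms(4) \<open>l0 \<in> L\<close> d unfolding trop_def by auto
    ultimately show "(\<lambda>d\<in>E. INF l\<in>L. v l d) d \<in> tropT" using d by simp
  qed auto
  moreover
  { fix I assume I: "I \<subseteq> E" "card I = Suc r"
    have "\<exists>a\<in>I. \<exists>b\<in>I. a \<noteq> b" using two_elems[of I] I assms(5) by simp
    then have two: "\<exists>a\<in>E. \<exists>b\<in>E. a \<noteq> b" using I by blast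
    have "\<forall>l\<in>L. min_twice E (\<lambda>e. circ \<nu> I e + v l e)"
      using assms(4) two I trop_all by blast
    then have m: "min_twice E (\<lambda>e. INF l\<in>L. circ \<nu> I e + v l e)"
      by (rule mt_family[OF assms(1,2,3)])
    have eq: "\<And>e. e \<in> E \<Longrightarrow> (INF l\<in>L. circ \<nu> I e + v l e) = circ \<nu> I e + (\<lambda>d\<in>E. INF l\<in>L. v l d) e"
      using add_INF_ereal[OF assms(1,2)] by simp
    have "min_twice E (\<lambda>e. circ \<nu> I e + (\<lambda>d\<in>E. INF l\<in>L. v l d) e)"
      by (rule mt_cong[OF m eq])
  }
  ultimately show ?thesis unfolding trop_def by blast
qed

context fwd
begin

definition basis :: "nat set \<Rightarrow> bool" where
  "basis A \<longleftrightarrow> A \<subseteq> S \<and> card A = k \<and> \<rho> A \<noteq> \<infinity>"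

definition indep :: "nat set \<Rightarrow> bool" where
  "indep X \<longleftrightarrow> (\<exists>A. basis A \<and> X \<subseteq> A)"

lemma basis_fin: "basis A \<Longrightarrow> finite A" unfolding basis_def using finS finite_subset by blast

lemma rho_exch:
  assumes A: "basis A" and A': "basis A'" and a: "a \<in> A" "a \<notin> A'"
  shows "\<exists>b\<in>A' - A. \<rho> (insert b (A - {a})) \<noteq> \<infinity>"
proof -
  obtain J where J: "J \<in> JJ" "\<rho> A = P (A \<union> J)" using rho_att A unfolding basis_def by blast
  obtain J' where J': "J' \<in> JJ" "\<rho> A' = P (A' \<union> J')" using rho_att A' unfolding basis_def by blast
  have cI: "card (A \<union> J) = r" "A \<union> J \<subseteq> {0..n}" "A \<inter> J = {}" using AJ_card J(1) A unfolding basis_def by auto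
  have cJ: "card (A' \<union> J') = r" "A' \<union> J' \<subseteq> {0..n}" "A' \<inter> J' = {}" using AJ_card J'(1) A' unfolding basis_def by auto
  have aS: "a \<in> S" using a A unfolding basis_def by auto
  have aJ': "a \<notin> J'" using J' aS by auto
  have "a \<in> (A \<union> J) - (A' \<union> J')" using a aJ' by auto
  then obtain j where j: "j \<in> (A' \<union> J') - (A \<union> J)"
    "P (insert j ((A \<union> J) - {a})) + P (insert a ((A' \<union> J') - {j})) \<le> P (A \<union> J) + P (A' \<union> J')"
    using Pvm cI cJ unfolding valuated_matroid_def by blast
  have rA: "\<rho> A \<noteq> -\<infinity>" "\<rho> A' \<noteq> -\<infinity>" using rho_tropT A A' unfolding basis_def by auto
  have "P (A \<union> J) + P (A' \<union> J') \<noteq> \<infinity>" using J J' A A' unfolding basis_def by simp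
  then have fin: "P (insert j ((A \<union> J) - {a})) \<noteq> \<infinity>" "P (insert a ((A' \<union> J') - {j})) \<noteq> \<infinity>"
    using j(2) by (auto simp: ereal_infty_less_eq(1))
  have jA': "j \<in> A'"
  proof (rule ccontr)
    assume jn: "j \<notin> A'"
    then have jJ': "j \<in> J'" using j by auto
    define Y where "Y = insert a ((A' \<union> J') - {j})"
    have fU: "finite (A' \<union> J')" using cJ finite_subset by blast
    have "card Y = r" unfolding Y_def using card_swap[OF fU, of j a] j aJ' a cJ by auto
    moreover have "Y \<subseteq> {0..n}" unfolding Y_def using cJ aS S_sub by auto
    ultimately have "card (Y \<inter> S) \<le> k" using rank_le fin(2) unfolding Y_def by blast
    moreover have "insert a A' \<subseteq> Y \<inter> S" unfolding Y_def using jn aS A' unfolding basis_def by auto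
    then have "card (insert a A') \<le> card (Y \<inter> S)" by (rule card_mono[rotated]) (simp add: finS)
    moreover have "card (insert a A') = Suc k" using a A' basis_fin[OF A'] unfolding basis_def by simp
    ultimately show False by simp
  qed
  have jA: "j \<notin> A" "j \<notin> J" using j by auto
  have "insert j (A - {a}) \<union> J = insert j ((A \<union> J) - {a})" using a J aS by auto
  then have "\<rho> (insert j (A - {a})) \<le> P (insert j ((A \<union> J) - {a}))" using rho_le[OF J(1)] by metis
  then have "\<rho> (insert j (A - {a})) \<noteq> \<infinity>" using fin(1) by (auto simp: ereal_infty_less_eq(1))
  then show ?thesis using jA' jA by blast
qed

lemma augment:
  assumes A1: "basis A1" "X \<subseteq> A1" and A0: "basis A0"
  shows "\<exists>A. basis A \<and> X \<subseteq> A \<and> A \<subseteq> X \<union> A0"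
proof -
  have "\<forall>A. basis A \<and> X \<subseteq> A \<and> card (A - (X \<union> A0)) = m \<longrightarrow> (\<exists>A'. basis A' \<and> X \<subseteq> A' \<and> A' \<subseteq> X \<union> A0)" for m
  proof (induction m)
    case 0
    show ?case
    proof (intro allI impI)
      fix A assume H: "basis A \<and> X \<subseteq> A \<and> card (A - (X \<union> A0)) = 0"
      then have "A - (X \<union> A0) = {}" using basis_fin by auto
      then show "\<exists>A'. basis A' \<and> X \<subseteq> A' \<and> A' \<subseteq> X \<union> A0" using H by blast
    qed
  next
    case (Suc m)
    show ?case
    proof (intro allI impI)
      fix A assume H: "basis A \<and> X \<subseteq> A \<and> card (A - (X \<union> A0)) = Suc m"
      then obtain a where a: "a \<in> A - (X \<union> A0)" by (metis card.empty ex_in_conv nat.distinct(1))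
      then obtain b where b: "b \<in> A0 - A" "\<rho> (insert b (A - {a})) \<noteq> \<infinity>"
        using rho_exch[of A A0 a] H A0 by auto
      define A2 where "A2 = insert b (A - {a})"
      have fA: "finite A" using H basis_fin by blast
      have "basis A2" unfolding basis_def A2_def
        using H b A0 card_swap[OF fA, of a b] a unfolding basis_def by auto
      moreover have "X \<subseteq> A2" unfolding A2_def using H a by auto
      moreover have "A2 - (X \<union> A0) = (A - (X \<union> A0)) - {a}" unfolding A2_def using b by auto
      then have "card (A2 - (X \<union> A0)) = m" using H a fA by simp
      ultimately show "\<exists>A'. basis A' \<and> X \<subseteq> A' \<and> A' \<subseteq> X \<union> A0" using Suc.IH by blast
    qed
  qed
  then show ?thesis using A1 by blast
qed

definition A0 :: "nat set" where "A0 = (fst \<circ> f) ` B0"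

lemma A0: "basis A0" "A0 \<subseteq> S'"
proof -
  have fB: "finite B0" using B0 finite_subset by auto
  have nc: "\<not> card ((fst \<circ> f) ` B0) < card B0" using B0(3) nu_eq[of B0] by auto
  then have "card A0 = k" unfolding A0_def using card_image_le[OF fB, of "fst \<circ> f"] B0 by simp
  moreover have "\<rho> A0 \<noteq> \<infinity>" using B0(3) nu_eq[of B0] nc unfolding A0_def by auto
  moreover have "A0 \<subseteq> S" unfolding A0_def pb_S_def using B0 by auto
  ultimately show "basis A0" unfolding basis_def by simp
  have "live i" if i: "i \<in> B0" for i
  proof (rule ccontr)
    assume "\<not> live i"
    then have "loopy i" using dead_loopy B0 i by auto
    then show False using B0 i unfolding loopy_def by auto
  qed
  then show "A0 \<subseteq> S'" unfolding A0_def S'_def by auto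
qed

definition Z :: "nat set" where "Z = {c \<in> S'. z c = \<infinity>}"
definition F :: "nat set" where "F = {c \<in> S'. z c \<noteq> \<infinity>}"

definition X :: "nat set" where
  "X = (SOME Y. Y \<subseteq> Z \<and> indep Y \<and> (\<forall>Y'. Y' \<subseteq> Z \<and> indep Y' \<longrightarrow> card Y' \<le> card Y))"

lemma X: "X \<subseteq> Z" "indep X" "\<And>d. d \<in> Z - X \<Longrightarrow> \<not> indep (insert d X)"
proof -
  define CSZ where "CSZ = {card Y | Y. Y \<subseteq> Z \<and> indep Y}"
  have finZ: "finite Z" unfolding Z_def using finS' by simp
  have "CSZ \<subseteq> card ` Pow Z" unfolding CSZ_def by auto
  then have fC: "finite CSZ" using finZ finite_subset by blast
  have "{} \<subseteq> Z \<and> indep {}" unfolding indep_def using A0(1) by blast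
  then have "card {} \<in> CSZ" unfolding CSZ_def by (intro CollectI exI[of _ "{}"]) simp
  then have "CSZ \<noteq> {}" by auto
  then have "Max CSZ \<in> CSZ" using fC by simp
  then obtain Y where Y: "Max CSZ = card Y" "Y \<subseteq> Z" "indep Y" unfolding CSZ_def by auto
  have "\<forall>Y'. Y' \<subseteq> Z \<and> indep Y' \<longrightarrow> card Y' \<le> card Y"
  proof (intro allI impI)
    fix Y' assume "Y' \<subseteq> Z \<and> indep Y'"
    then have "card Y' \<in> CSZ" unfolding CSZ_def by blast
    then show "card Y' \<le> card Y" using Y(1) fC by (metis Max_ge)
  qed
  then have ex: "\<exists>Y. Y \<subseteq> Z \<and> indep Y \<and> (\<forall>Y'. Y' \<subseteq> Z \<and> indep Y' \<longrightarrow> card Y' \<le> card Y)"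
    using Y by blast
  have Xp: "X \<subseteq> Z \<and> indep X \<and> (\<forall>Y'. Y' \<subseteq> Z \<and> indep Y' \<longrightarrow> card Y' \<le> card X)"
    unfolding X_def by (rule someI_ex[OF ex])
  then show "X \<subseteq> Z" "indep X" by auto
  fix d assume d: "d \<in> Z - X"
  show "\<not> indep (insert d X)"
  proof
    assume "indep (insert d X)"
    then have "card (insert d X) \<le> card X" using Xp d by auto
    moreover have "finite X" using Xp finZ finite_subset by blast
    ultimately show False using d by simp
  qed
qed

lemma FZ: "F \<inter> Z = {}" "F \<union> Z = S'" unfolding F_def Z_def by auto

end

context fwd
begin

definition AA :: "nat set set" where
  "AA = {A. X \<subseteq> A \<and> A \<subseteq> S' \<and> card A = k \<and> A - X \<subseteq> F \<and> \<rho> A \<noteq> \<infinity>}"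

lemma AA_basis: "A \<in> AA \<Longrightarrow> basis A" unfolding AA_def basis_def using S'_sub by auto

lemma AA_fin: "finite AA"
proof -
  have "AA \<subseteq> Pow S'" unfolding AA_def by auto
  then show ?thesis using finS' finite_subset by blast
qed

lemma XZ: "X \<subseteq> S'" "\<And>c. c \<in> X \<Longrightarrow> c \<notin> F" "\<And>c. c \<in> X \<Longrightarrow> z c = \<infinity>"
  using X(1) unfolding Z_def F_def by auto

lemma AA_ne: "AA \<noteq> {}"
proof -
  obtain A1 where A1: "basis A1" "X \<subseteq> A1" using X(2) unfolding indep_def by blast
  obtain A where A: "basis A" "X \<subseteq> A" "A \<subseteq> X \<union> A0" using augment[OF A1 A0(1)] by blast
  have AS: "A \<subseteq> S'" using A XZ(1) A0(2) by auto
  have "A - X \<subseteq> F"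
  proof
    fix a assume a: "a \<in> A - X"
    show "a \<in> F"
    proof (rule ccontr)
      assume "a \<notin> F"
      then have "a \<in> Z - X" using a AS FZ by auto
      moreover have "indep (insert a X)" unfolding indep_def using A a by auto
      ultimately show False using X(3) by blast
    qed
  qed
  then have "A \<in> AA" unfolding AA_def using A AS unfolding basis_def by auto
  then show ?thesis by auto
qed

definition rr :: "nat set \<Rightarrow> real" where "rr A = real_of_ereal (\<rho> A)"
definition zz :: "nat \<Rightarrow> real" where "zz c = real_of_ereal (z c)"
definition g :: "nat set \<Rightarrow> real" where "g A = rr A - (\<Sum>a\<in>A - X. zz a)"

lemma rho_rr: "basis A \<Longrightarrow> \<rho> A = ereal (rr A)"
proof -
  assume b: "basis A"
  then have "\<rho> A \<noteq> \<infinity>" "\<rho> A \<noteq> -\<infinity>" using rho_tropT unfolding basis_def by auto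
  then show ?thesis unfolding rr_def by (cases "\<rho> A") auto
qed

lemma z_zz: "c \<in> F \<Longrightarrow> z c = ereal (zz c)"
proof -
  assume c: "c \<in> F"
  then have "z c \<noteq> \<infinity>" "z c \<noteq> -\<infinity>" using zT unfolding F_def by auto
  then show ?thesis unfolding zz_def by (cases "z c") auto
qed

lemma gswap:
  assumes A: "A \<in> AA" and a: "a \<in> A" "a \<notin> X" and b: "b \<notin> A" "b \<in> F"
  shows "g (insert b (A - {a})) = g A + rr (insert b (A - {a})) - rr A - zz b + zz a"
proof -
  have fA: "finite A" using AA_basis[OF A] basis_fin by blast
  have bX: "b \<notin> X" using XZ(2) b by auto
  have e1: "insert b (A - {a}) - X = insert b ((A - X) - {a})" using bX by auto
  have s1: "(\<Sum>c\<in>insert b (A - {a}) - X. zz c) = zz b + (\<Sum>c\<in>(A - X) - {a}. zz c)"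
    unfolding e1 using fA b by simp
  have s2: "(\<Sum>c\<in>A - X. zz c) = zz a + (\<Sum>c\<in>(A - X) - {a}. zz c)"
    using sum.remove[of "A - X" a zz] fA a by simp
  show ?thesis unfolding g_def s1 s2 by simp
qed

lemma swapAA:
  assumes A: "A \<in> AA" and a: "a \<in> A" "a \<notin> X" and b: "b \<notin> A" "b \<in> F"
    and r: "\<rho> (insert b (A - {a})) \<noteq> \<infinity>"
  shows "insert b (A - {a}) \<in> AA"
proof -
  have fA: "finite A" using AA_basis[OF A] basis_fin by blast
  have "card (insert b (A - {a})) = k" using card_swap[OF fA a(1) b(1)] A unfolding AA_def by simp
  then show ?thesis using A a b r unfolding AA_def F_def by auto
qed

lemma gmin:
  assumes e: "e \<in> F"
  shows "\<exists>A\<in>AA. e \<in> A \<and> (\<forall>A'\<in>AA. g A \<le> g A')"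
proof (rule ccontr)
  assume nex: "\<not> ?thesis"
  have "Min (g ` AA) \<in> g ` AA" using AA_fin AA_ne by simp
  then obtain As where As: "As \<in> AA" "g As = Min (g ` AA)" by auto
  have Asmin: "\<forall>A'\<in>AA. g As \<le> g A'" using As AA_fin by simp
  have eAs: "e \<notin> As" using nex As Asmin by blast
  define C where "C = insert e As"
  have fAs: "finite As" using AA_basis[OF As(1)] basis_fin by blast
  have CS: "C \<subseteq> S'" "card C = Suc k" unfolding C_def using As e eAs fAs unfolding AA_def F_def by auto
  define G where "G = (\<lambda>d. if d \<in> C then \<rho> (C - {d}) + z d else \<infinity>)"
  have mt: "min_twice {0..n} G" unfolding G_def by (rule H[OF CS])
  have Ge: "G e = ereal (rr As + zz e)"
  proof -
    have "C - {e} = As" unfolding C_def using eAs by auto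
    then show ?thesis unfolding G_def C_def using rho_rr[OF AA_basis[OF As(1)]] z_zz[OF e] by simp
  qed
  have less: "G e < G d" if d: "d \<in> {0..n}" "d \<noteq> e" for d
  proof (cases "d \<in> C")
    case False
    then have "G d = \<infinity>" unfolding G_def by simp
    then show ?thesis using Ge by simp
  next
    case True
    then have dA: "d \<in> As" using d C_def by auto
    have Cd: "C - {d} = insert e (As - {d})" unfolding C_def using d by auto
    show ?thesis
    proof (cases "d \<in> X")
      case True
      then have "z d = \<infinity>" using XZ by auto
      then have "G d = \<infinity>" unfolding G_def using \<open>d \<in> C\<close> by simp
      then show ?thesis using Ge by simp
    next
      case False
      note dX = False
      show ?thesis
      proof (cases "\<rho> (insert e (As - {d})) = \<infinity>")
        case True
        then have "G d = \<infinity>" unfolding G_def using \<open>d \<in> C\<close> Cd by simp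
        then show ?thesis using Ge by simp
      next
        case False
        define A2 where "A2 = insert e (As - {d})"
        have A2: "A2 \<in> AA" unfolding A2_def by (rule swapAA[OF As(1) dA dX eAs e False])
        have gs: "g A2 = g As + rr A2 - rr As - zz e + zz d"
          unfolding A2_def by (rule gswap[OF As(1) dA dX eAs e])
        have "g As \<le> g A2" using Asmin A2 by blast
        moreover have "g As \<noteq> g A2"
        proof
          assume "g As = g A2"
          then have "\<forall>A'\<in>AA. g A2 \<le> g A'" using Asmin by simp
          moreover have "e \<in> A2" unfolding A2_def by simp
          ultimately show False using nex A2 by blast
        qed
        ultimately have "g As < g A2" by simp
        then have ineq: "rr As + zz e < rr A2 + zz d" using gs by simp
        have dF: "d \<in> F" using dA dX As unfolding AA_def by auto
        have "G d = ereal (rr A2 + zz d)"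
          unfolding G_def using \<open>d \<in> C\<close> Cd rho_rr[OF AA_basis[OF A2]] z_zz[OF dF] unfolding A2_def by simp
        then show ?thesis using Ge ineq by simp
      qed
    qed
  qed
  obtain e1 e2 where ee: "e1 \<in> {0..n}" "e2 \<in> {0..n}" "e1 \<noteq> e2" "G e1 = G e2" "\<forall>d\<in>{0..n}. G e1 \<le> G d"
    using mt unfolding min_twice_def by blast
  have eE: "e \<in> {0..n}" using e S'_sub unfolding F_def by auto
  show False
  proof (cases "e1 = e")
    case True
    then have "G e2 \<le> G e" using ee eE by simp
    moreover have "G e < G e2" using less[of e2] ee(2,3) True by blast
    ultimately show False by simp
  next
    case False
    then have "G e1 \<le> G e" using ee eE by simp
    moreover have "G e < G e1" using less[of e1] ee(1) False by blast
    ultimately show False by simp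
  qed
qed

end

context fwd
begin

definition Ae :: "nat \<Rightarrow> nat set" where
  "Ae e = (SOME A. A \<in> AA \<and> e \<in> A \<and> (\<forall>A'\<in>AA. g A \<le> g A'))"
definition Je :: "nat \<Rightarrow> nat set" where
  "Je e = (SOME J. J \<in> JJ \<and> \<rho> (Ae e) = P (Ae e \<union> J))"
definition Ke :: "nat \<Rightarrow> nat set" where "Ke e = (Ae e - {e}) \<union> Je e"
definition lam :: "nat \<Rightarrow> real" where "lam e = zz e - rr (Ae e)"
definition D :: "nat set \<Rightarrow> nat \<Rightarrow> ereal" where
  "D K = (\<lambda>d\<in>{1..n}. if d \<in> K then \<infinity> else \<mu> (insert d K))"
definition v :: "nat \<Rightarrow> nat \<Rightarrow> ereal" where
  "v e = (\<lambda>d\<in>{1..n}. ereal (lam e) + D (Ke e) d)"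
definition z' :: "nat \<Rightarrow> ereal" where
  "z' = (\<lambda>d\<in>{1..n}. INF e\<in>F. v e d)"

lemma Ae: "e \<in> F \<Longrightarrow> Ae e \<in> AA \<and> e \<in> Ae e \<and> (\<forall>A'\<in>AA. g (Ae e) \<le> g A')"
proof -
  assume e: "e \<in> F"
  have "\<exists>A. A \<in> AA \<and> e \<in> A \<and> (\<forall>A'\<in>AA. g A \<le> g A')" using gmin[OF e] by blast
  then show ?thesis unfolding Ae_def by (rule someI_ex)
qed

lemma Je: "e \<in> F \<Longrightarrow> Je e \<in> JJ \<and> \<rho> (Ae e) = P (Ae e \<union> Je e)"
proof -
  assume e: "e \<in> F"
  have "\<rho> (Ae e) \<noteq> \<infinity>" using Ae[OF e] unfolding AA_def by auto
  then have "\<exists>J. J \<in> JJ \<and> \<rho> (Ae e) = P (Ae e \<union> J)" using rho_att by blast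
  then show ?thesis unfolding Je_def by (rule someI_ex)
qed

lemma k1: "e \<in> F \<Longrightarrow> 1 \<le> k"
proof -
  assume e: "e \<in> F"
  have A: "Ae e \<in> AA" "e \<in> Ae e" using Ae[OF e] by auto
  have "finite (Ae e)" using basis_fin[OF AA_basis[OF A(1)]] .
  moreover have "card (Ae e) = k" using A(1) unfolding AA_def by simp
  ultimately have "finite (Ae e)" "e \<in> Ae e" "card (Ae e) = k" using A by auto
  then have "card (Ae e) > 0" using card_gt_0_iff by blast
  then show ?thesis using \<open>card (Ae e) = k\<close> by simp
qed

lemma Ke:
  assumes e: "e \<in> F"
  shows "Ke e \<subseteq> {1..n}" "card (Ke e) = r - 1" "e \<notin> Ke e" "0 \<notin> Ae e \<union> Je e"
    "insert e (Ke e) = Ae e \<union> Je e"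
proof -
  have A: "Ae e \<in> AA" "e \<in> Ae e" using Ae[OF e] by auto
  have J: "Je e \<in> JJ" "\<rho> (Ae e) = P (Ae e \<union> Je e)" using Je[OF e] by auto
  have fin: "\<rho> (Ae e) \<noteq> \<infinity>" using A unfolding AA_def by auto
  show z0: "0 \<notin> Ae e \<union> Je e" using fin J(2) P0 by metis
  have AS: "Ae e \<subseteq> S'" "Ae e \<subseteq> S" using A S'_sub unfolding AA_def by auto
  have "Je e \<subseteq> {0..n}" using J by auto
  then have "Je e \<subseteq> {1..n}" using z0 sub1 by blast
  then show "Ke e \<subseteq> {1..n}" unfolding Ke_def using AS S'_sub by auto
  have dj: "(Ae e - {e}) \<inter> Je e = {}" using J AS by auto
  have fA: "finite (Ae e)" using AA_basis[OF A(1)] basis_fin by blast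
  have fJ: "finite (Je e)" using J by (auto intro: finite_subset)
  have "card (Ae e - {e}) = k - 1" using A fA unfolding AA_def by (simp add: card_Diff_singleton)
  moreover have "card (Je e) = r - k" using J by simp
  ultimately show "card (Ke e) = r - 1" unfolding Ke_def using card_Un_disjoint[OF _ fJ dj] fA k1[OF e] k_le_r
    by simp
  have "e \<in> S" using A AS by auto
  then show "e \<notin> Ke e" unfolding Ke_def using J by auto
  show "insert e (Ke e) = Ae e \<union> Je e" unfolding Ke_def using A by auto
qed

lemma v_trop:
  assumes e: "e \<in> F"
  shows "v e \<in> trop {1..n} r \<mu>"
proof -
  have r1: "1 \<le> r" using k1[OF e] k_le_r by simp
  have "D (Ke e) \<in> trop {1..n} r \<mu>" unfolding D_def using cocirc[OF vm r1 Ke(1,2)[OF e]] .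
  then have "(\<lambda>d\<in>{1..n}. ereal (lam e) + D (Ke e) d) \<in> trop {1..n} r \<mu>" by (rule trop_shift)
  then show ?thesis unfolding v_def .
qed

lemma z'_trop:
  assumes "F \<noteq> {}"
  shows "z' \<in> trop {1..n} r \<mu>"
proof -
  obtain e where e: "e \<in> F" using assms by auto
  have r1: "1 \<le> r" using k1[OF e] k_le_r by simp
  have fF: "finite F" using finS' unfolding F_def by simp
  show ?thesis unfolding z'_def using trop_min1[OF fF assms _ _ r1, of "{1..n}" v \<mu>] v_trop by auto
qed

lemma v_ge:
  assumes e: "e \<in> F" and d: "d \<in> S'"
  shows "z d \<le> v e d"
proof -
  have dn: "d \<in> {1..n}" using d S'_sub by auto
  have A: "Ae e \<in> AA" "e \<in> Ae e" "\<forall>A'\<in>AA. g (Ae e) \<le> g A'" using Ae[OF e] by auto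
  have J: "Je e \<in> JJ" "\<rho> (Ae e) = P (Ae e \<union> Je e)" using Je[OF e] by auto
  have KK: "Ke e \<subseteq> {1..n}" "e \<notin> Ke e" "0 \<notin> Ae e \<union> Je e" "insert e (Ke e) = Ae e \<union> Je e"
    using Ke[OF e] by auto
  have ve: "v e d = ereal (lam e) + D (Ke e) d" unfolding v_def using dn by simp
  show ?thesis
  proof (cases "d \<in> Ke e")
    case True then show ?thesis unfolding ve D_def using dn by simp
  next
    case False
    note dK = False
    have mu: "\<mu> (insert d (Ke e)) = P (insert d (Ke e))" unfolding pointed_def using KK dn by auto
    have Dd: "D (Ke e) d = P (insert d (Ke e))" unfolding D_def using dn dK mu by simp
    show ?thesis
    proof (cases "d = e")
      case True
      have "D (Ke e) d = ereal (rr (Ae e))" using Dd True KK J rho_rr[OF AA_basis[OF A(1)]] by simp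
      then show ?thesis unfolding ve lam_def using True z_zz[OF e] by simp
    next
      case False
      have dA: "d \<notin> Ae e" using dK False unfolding Ke_def by auto
      define A2 where "A2 = insert d (Ae e - {e})"
      have ins: "insert d (Ke e) = A2 \<union> Je e" unfolding A2_def Ke_def by auto
      have ge: "\<rho> A2 \<le> D (Ke e) d" using Dd ins rho_le[OF J(1)] by simp
      show ?thesis
      proof (cases "\<rho> A2 = \<infinity>")
        case True
        then have "D (Ke e) d = \<infinity>" using ge by (simp add: ereal_infty_less_eq(1))
        then show ?thesis unfolding ve by simp
      next
        case False
        note fin = False
        have eX: "e \<notin> X" using XZ(2) e by auto
        show ?thesis
        proof (cases "d \<in> F")
          case False
          then have dZ: "d \<in> Z - X" using d FZ dA A unfolding AA_def by auto
          have fA: "finite (Ae e)" using AA_basis[OF A(1)] basis_fin by blast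
          have "basis A2" unfolding basis_def A2_def
            using AA_basis[OF A(1)] card_swap[OF fA A(2) dA] d S'_sub fin unfolding basis_def A2_def by auto
          moreover have "insert d X \<subseteq> A2" unfolding A2_def using A eX unfolding AA_def by auto
          ultimately have "indep (insert d X)" unfolding indep_def by blast
          then show ?thesis using X(3) dZ by blast
        next
          case True
          have A2A: "A2 \<in> AA" unfolding A2_def by (rule swapAA[OF A(1) A(2) eX dA True]) (use fin A2_def in simp)
          have gs: "g A2 = g (Ae e) + rr A2 - rr (Ae e) - zz d + zz e"
            unfolding A2_def by (rule gswap[OF A(1) A(2) eX dA True])
          have "g (Ae e) \<le> g A2" using A(3) A2A by blast
          then have "zz d \<le> lam e + rr A2" unfolding lam_def using gs by simp
          then have "z d \<le> ereal (lam e) + \<rho> A2" using z_zz[OF True] rho_rr[OF AA_basis[OF A2A]] by simp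
          also have "\<dots> \<le> ereal (lam e) + D (Ke e) d" using ge by (rule add_left_mono)
          finally show ?thesis unfolding ve .
        qed
      qed
    qed
  qed
qed

lemma v_eq: "e \<in> F \<Longrightarrow> v e e = z e"
proof -
  assume e: "e \<in> F"
  have A: "Ae e \<in> AA" "e \<in> Ae e" using Ae[OF e] by auto
  have J: "\<rho> (Ae e) = P (Ae e \<union> Je e)" using Je[OF e] by auto
  have KK: "Ke e \<subseteq> {1..n}" "e \<notin> Ke e" "0 \<notin> Ae e \<union> Je e" "insert e (Ke e) = Ae e \<union> Je e"
    using Ke[OF e] by auto
  have en: "e \<in> {1..n}" using e S'_sub unfolding F_def by auto
  have "\<mu> (insert e (Ke e)) = P (Ae e \<union> Je e)" unfolding pointed_def using KK by auto
  then have "D (Ke e) e = ereal (rr (Ae e))" unfolding D_def using en KK J rho_rr[OF AA_basis[OF A(1)]] by simp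
  then show ?thesis unfolding v_def lam_def using en z_zz[OF e] by simp
qed

lemma z'_eq:
  assumes d: "d \<in> S'"
  shows "z' d = z d"
proof -
  have dn: "d \<in> {1..n}" using d S'_sub by auto
  have ge: "z d \<le> z' d" unfolding z'_def using dn v_ge d by (auto intro: INF_greatest)
  show ?thesis
  proof (cases "d \<in> F")
    case True
    have "z' d \<le> v d d" unfolding z'_def using dn True by (auto intro: INF_lower)
    then show ?thesis using v_eq[OF True] ge by simp
  next
    case False
    then have "z d = \<infinity>" using d unfolding F_def by auto
    then show ?thesis using ge by (simp add: ereal_infty_less_eq(1))
  qed
qed

end

lemma tmv_eval:
  assumes i: "i \<in> {1..n}" and M: "\<forall>j\<in>{1..n}. M i j = (if c = j then a else \<infinity>)"
  shows "tmv {1..n} M z i = (if c \<in> {1..n} then a + z c else \<infinity>)"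
proof -
  have t: "tmv {1..n} M z i = (INF j\<in>{1..n}. M i j + z j)" unfolding tmv_def using i by simp
  show ?thesis
  proof (cases "c \<in> {1..n}")
    case True
    have "(INF j\<in>{1..n}. M i j + z j) \<le> M i c + z c" using True by (rule INF_lower)
    moreover have "M i c + z c \<le> (INF j\<in>{1..n}. M i j + z j)"
    proof (rule INF_greatest)
      fix j assume j: "j \<in> {1..n}"
      show "M i c + z c \<le> M i j + z j"
      proof (cases "j = c")
        case True then show ?thesis by simp
      next
        case False then show ?thesis using M j by simp
      qed
    qed
    ultimately have "(INF j\<in>{1..n}. M i j + z j) = M i c + z c" by (rule antisym)
    moreover have "M i c = a" using M True by simp
    ultimately show ?thesis using t True by simp
  next
    case False
    have "\<infinity> \<le> (INF j\<in>{1..n}. M i j + z j)"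
    proof (rule INF_greatest)
      fix j assume j: "j \<in> {1..n}"
      then have "c \<noteq> j" using False by auto
      then show "\<infinity> \<le> M i j + z j" using M j by simp
    qed
    then have "(INF j\<in>{1..n}. M i j + z j) = \<infinity>" by (simp add: ereal_infty_less_eq(1))
    then show ?thesis unfolding if_not_P[OF False] using t by simp
  qed
qed

context fwd
begin

lemma fwd_main:
  assumes ne: "restrict x {1..n} \<noteq> inf_vec n"
    and M: "\<forall>i\<in>{1..n}. \<forall>j\<in>{1..n}. M i j = (if fst (f i) = j then snd (f i) else \<infinity>)"
  shows "restrict x {1..n} \<in> tmv {1..n} M ` trop {1..n} r \<mu>"
proof -
  have "\<exists>i\<in>{1..n}. x i \<noteq> \<infinity>"
  proof (rule ccontr)
    assume "\<not> ?thesis"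
    then have "restrict x {1..n} = inf_vec n" unfolding inf_vec_def by (auto intro!: ext)
    then show False using ne by simp
  qed
  then obtain i0 where i0: "i0 \<in> {1..n}" "x i0 \<noteq> \<infinity>" by blast
  have li0: "live i0"
  proof (rule ccontr)
    assume "\<not> live i0"
    then have "loopy i0" using dead_loopy i0 by auto
    then show False using loop_inf i0 by auto
  qed
  have "fst (f i0) \<in> S'" unfolding S'_def using li0 by auto
  moreover have "z (fst (f i0)) \<noteq> \<infinity>" using x_eq[OF li0] i0 by auto
  ultimately have Fne: "F \<noteq> {}" unfolding F_def by auto
  have zt: "z' \<in> trop {1..n} r \<mu>" by (rule z'_trop[OF Fne])
  have "tmv {1..n} M z' = restrict x {1..n}"
  proof
    fix i
    show "tmv {1..n} M z' i = restrict x {1..n} i"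
    proof (cases "i \<in> {1..n}")
      case False then show ?thesis by (simp only: tmv_def restrict_def if_not_P[OF False] if_False)
    next
      case True
      note iN = True
      have ev: "tmv {1..n} M z' i = (if fst (f i) \<in> {1..n} then snd (f i) + z' (fst (f i)) else \<infinity>)"
        using tmv_eval[OF True] M True by blast
      show ?thesis
      proof (cases "live i")
        case True
        have c: "fst (f i) \<in> S'" unfolding S'_def using True by auto
        then have "fst (f i) \<in> {1..n}" using S'_sub by auto
        then show ?thesis using ev z'_eq[OF c] x_eq[OF True] iN by simp
      next
        case False
        have xi: "x i = \<infinity>" using loop_inf dead_loopy False iN by auto
        have "fst (f i) = 0 \<or> snd (f i) = \<infinity>" using False iN unfolding live_def by auto
        then have "tmv {1..n} M z' i = \<infinity>" using ev by auto
        then show ?thesis using xi iN by simp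
      qed
    qed
  qed
  then show ?thesis using zt by (metis image_eqI)
qed

end

context pbs
begin

lemma main_eq:
  assumes M: "\<forall>i\<in>{1..n}. \<forall>j\<in>{1..n}. M i j = (if fst (f i) = j then snd (f i) else \<infinity>)"
    and B0: "\<exists>B0. B0 \<subseteq> {0..n} \<and> card B0 = k \<and> \<nu> B0 \<noteq> \<infinity>"
  shows "pb_trop n r \<mu> f - {inf_vec n} = tmv {1..n} M ` trop {1..n} r \<mu> - {inf_vec n}"
proof
  show "pb_trop n r \<mu> f - {inf_vec n} \<subseteq> tmv {1..n} M ` trop {1..n} r \<mu> - {inf_vec n}"
  proof
    fix y assume y: "y \<in> pb_trop n r \<mu> f - {inf_vec n}"
    then obtain x where x: "x \<in> trop {0..n} k \<nu>" "y = restrict x {1..n}"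
      unfolding pb_trop_def pb_rank_def by auto
    have n1: "1 \<le> n"
    proof (rule ccontr)
      assume "\<not> 1 \<le> n"
      then have "{1..n} = {}" by auto
      then have "y = inf_vec n" unfolding x(2) inf_vec_def by (simp add: restrict_def)
      then show False using y by simp
    qed
    obtain B where B: "B \<subseteq> {0..n}" "card B = k" "\<nu> B \<noteq> \<infinity>" using B0 by blast
    interpret fw: fwd \<mu> n r f x B
      by unfold_locales (use x B n1 in auto)
    have "y \<in> tmv {1..n} M ` trop {1..n} r \<mu>" using fw.fwd_main[OF _ M] y x(2) by simp
    then show "y \<in> tmv {1..n} M ` trop {1..n} r \<mu> - {inf_vec n}" using y by simp
  qed
  show "tmv {1..n} M ` trop {1..n} r \<mu> - {inf_vec n} \<subseteq> pb_trop n r \<mu> f - {inf_vec n}"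
  proof
    fix y assume y: "y \<in> tmv {1..n} M ` trop {1..n} r \<mu> - {inf_vec n}"
    then obtain z where z: "z \<in> trop {1..n} r \<mu>" "y = tmv {1..n} M z" by auto
    have n1: "1 \<le> n"
    proof (rule ccontr)
      assume "\<not> 1 \<le> n"
      then have "{1..n} = {}" by auto
      then have "y = inf_vec n" unfolding z(2) inf_vec_def tmv_def by (simp add: restrict_def)
      then show False using y by simp
    qed
    define x where "x = (\<lambda>i\<in>{0..n}. snd (f i) + zh z (fst (f i)))"
    have xt: "x \<in> trop {0..n} k \<nu>" unfolding x_def by (rule dir_back[OF z(1) n1])
    have "restrict x {1..n} = y"
    proof
      fix i
      show "restrict x {1..n} i = y i"
      proof (cases "i \<in> {1..n}")
        case False then show ?thesis unfolding z(2) by (simp only: tmv_def restrict_def if_not_P[OF False] if_False)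
      next
        case True
        have ev: "y i = (if fst (f i) \<in> {1..n} then snd (f i) + z (fst (f i)) else \<infinity>)"
          unfolding z(2) using tmv_eval[OF True] M True by blast
        have iE: "i \<in> {0..n}" using True by auto
        have fE: "fst (f i) \<in> {0..n}" using frange[OF iE] by simp
        have xi: "x i = snd (f i) + zh z (fst (f i))" unfolding x_def using iE by simp
        show ?thesis
        proof (cases "fst (f i) = 0")
          case True
          then show ?thesis using xi ev iE \<open>i \<in> {1..n}\<close> unfolding zh_def by simp
        next
          case False
          then have "fst (f i) \<in> {1..n}" using fE by auto
          then show ?thesis using xi ev False \<open>i \<in> {1..n}\<close> fE unfolding zh_def by simp
        qed
      qed
    qed
    then have "y = (\<lambda>x. restrict x {1..n}) x" by simp
    then have "y \<in> pb_trop n r \<mu> f" unfolding pb_trop_def by (rule image_eqI[OF _ xt])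
    then show "y \<in> pb_trop n r \<mu> f - {inf_vec n}" using y by simp
  qed
qed

lemma B0_ex:
  assumes fin: "\<forall>i\<in>{0..n}. fst (f i) \<noteq> 0 \<longrightarrow> snd (f i) \<noteq> \<infinity>"
  shows "\<exists>B0. B0 \<subseteq> {0..n} \<and> card B0 = k \<and> \<nu> B0 \<noteq> \<infinity>"
proof -
  obtain X B where XB: "X \<subseteq> S" "card X = k" "B \<subseteq> {0..n}" "card B = r" "P B \<noteq> \<infinity>" "X \<subseteq> B"
    using rank_wit by blast
  have fB: "finite B" using XB(3) finite_subset by blast
  have le: "card (B \<inter> S) \<le> k" using rank_le XB by blast
  have sub: "X \<subseteq> B \<inter> S" using XB by auto
  have fBS: "finite (B \<inter> S)" using fB by simp
  have "card X \<le> card (B \<inter> S)" by (rule card_mono[OF fBS sub])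
  then have "card X = card (B \<inter> S)" using le XB(2) by simp
  then have "X = B \<inter> S" by (rule card_subset_eq[OF fBS sub])
  then have BS: "B \<inter> S = X" by simp
  define J where "J = B - X"
  have fX: "finite X" using XB fB finite_subset by auto
  have "J \<in> JJ" unfolding J_def using XB BS fB fX by (auto simp: card_Diff_subset)
  moreover have "X \<union> J = B" unfolding J_def using XB by auto
  ultimately have rX: "\<rho> X \<noteq> \<infinity>" using rho_le[of J X] XB(5) by (auto simp: ereal_infty_less_eq(1))
  have X0: "0 \<notin> X" using XB P0 by auto
  define sg where "sg j = (SOME i. i \<in> {0..n} \<and> fst (f i) = j)" for j
  have sg: "sg j \<in> {0..n} \<and> fst (f (sg j)) = j" if "j \<in> X" for j
  proof -
    have "j \<in> fst ` f ` {0..n}" using that XB(1) unfolding pb_S_def by blast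
    then have "\<exists>i. i \<in> {0..n} \<and> fst (f i) = j" by (auto simp: image_iff)
    then show ?thesis unfolding sg_def by (rule someI_ex)
  qed
  have injs: "inj_on sg X" unfolding inj_on_def using sg by metis
  define B0 where "B0 = sg ` X"
  have img: "(fst \<circ> f) ` B0 = X" unfolding B0_def using sg by (auto simp: image_iff)
  have cB0: "card B0 = k" unfolding B0_def using card_image[OF injs] XB by simp
  have B0E: "B0 \<subseteq> {0..n}" unfolding B0_def using sg by auto
  have fB0: "finite B0" unfolding B0_def using fX by simp
  have "(\<Sum>i\<in>B0. snd (f i)) \<noteq> \<infinity>"
  proof
    assume "(\<Sum>i\<in>B0. snd (f i)) = \<infinity>"
    then obtain i where i: "i \<in> B0" "snd (f i) = \<infinity>" using fB0 by (metis (no_types, lifting) sum_Pinfty)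
    then obtain j where j: "j \<in> X" "i = sg j" unfolding B0_def by auto
    then have "j \<noteq> 0" using X0 by metis
    then have "i \<in> {0..n}" "fst (f i) \<noteq> 0" using sg[OF j(1)] j(2) by auto
    then show False using fin i by auto
  qed
  moreover have "\<not> card ((fst \<circ> f) ` B0) < card B0" using img cB0 XB by simp
  ultimately have "\<nu> B0 \<noteq> \<infinity>" using nu_eq[of B0] img rX by simp
  then show ?thesis using B0E cB0 by blast
qed

end

lemma the_row:
  assumes wm: "weakly_monomial n M" and i: "i \<in> {1..n}" and ex: "\<exists>j\<in>{1..n}. M i j \<noteq> 0"
  shows "(THE j. j \<in> {1..n} \<and> M i j \<noteq> 0) \<in> {1..n} \<and> M i (THE j. j \<in> {1..n} \<and> M i j \<noteq> 0) \<noteq> 0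
    \<and> (\<forall>j\<in>{1..n}. M i j \<noteq> 0 \<longrightarrow> j = (THE j. j \<in> {1..n} \<and> M i j \<noteq> 0))"
proof -
  obtain j0 where j0: "j0 \<in> {1..n}" "M i j0 \<noteq> 0" using ex by blast
  have u: "\<And>j. j \<in> {1..n} \<and> M i j \<noteq> 0 \<Longrightarrow> j = j0"
    using wm i j0 unfolding weakly_monomial_def by blast
  have "(THE j. j \<in> {1..n} \<and> M i j \<noteq> 0) = j0" using j0 u by (intro the_equality) auto
  then show ?thesis using j0 u by auto
qed

lemma val_facts:
  assumes "valuation val"
  shows "val 0 = \<infinity>" "\<And>a. val a \<in> tropT" "\<And>a. a \<noteq> 0 \<Longrightarrow> val a \<noteq> \<infinity>"
  using assms unfolding valuation_def by auto

theorem proposition2p24: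
  fixes val :: "'k::field \<Rightarrow> ereal" and \<mu> :: "nat set \<Rightarrow> ereal" and n r :: nat
  assumes "valuation val"
    and "valuated_matroid {1..n} r \<mu>"
  shows
    "(\<forall>f A.
        (\<forall>i\<in>{0..n}. fst (f i) \<in> {0..n} \<and> snd (f i) \<in> tropT) \<and>
        (\<forall>i\<in>{1..n}. \<exists>k. snd (f i) = val k) \<and>
        assoc_matrix val n f A \<and>
        valuated_matroid {0..n} (pb_rank n r \<mu> f) (pullback n r \<mu> f) \<longrightarrow>
        pb_trop n r \<mu> f - {inf_vec n} = lin_image val n A r \<mu> - {inf_vec n})
     \<and>
     (\<forall>M. weakly_monomial n M \<longrightarrow>
        pb_trop n r \<mu> (assoc_map val n M) - {inf_vec n} = lin_image val n M r \<mu> - {inf_vec n})"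
proof (intro conjI allI impI)
  note vf = val_facts[OF assms(1)]
  fix f A
  assume H: "(\<forall>i\<in>{0..n}. fst (f i) \<in> {0..n} \<and> snd (f i) \<in> tropT) \<and>
        (\<forall>i\<in>{1..n}. \<exists>k. snd (f i) = val k) \<and>
        assoc_matrix val n f A \<and>
        valuated_matroid {0..n} (pb_rank n r \<mu> f) (pullback n r \<mu> f)"
  interpret pbs \<mu> n r f using assms(2) H by unfold_locales auto
  have M: "\<forall>i\<in>{1..n}. \<forall>j\<in>{1..n}. val (A i j) = (if fst (f i) = j then snd (f i) else \<infinity>)"
    using H vf(1) unfolding assoc_matrix_def by auto
  have B0: "\<exists>B0. B0 \<subseteq> {0..n} \<and> card B0 = k \<and> \<nu> B0 \<noteq> \<infinity>"
    using H unfolding valuated_matroid_def by blast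
  show "pb_trop n r \<mu> f - {inf_vec n} = lin_image val n A r \<mu> - {inf_vec n}"
    unfolding lin_image_def by (rule main_eq[OF M B0])
next
  note vf = val_facts[OF assms(1)]
  fix M :: "nat \<Rightarrow> nat \<Rightarrow> 'k"
  assume wm: "weakly_monomial n M"
  define f where "f = assoc_map val n M"
  have fz: "f i = (0, \<infinity>)" if "i = 0 \<or> (\<forall>j\<in>{1..n}. M i j = 0)" for i
    unfolding f_def assoc_map_def using that by auto
  have fnz: "f i = (THE j. j \<in> {1..n} \<and> M i j \<noteq> 0, val (M i (THE j. j \<in> {1..n} \<and> M i j \<noteq> 0)))"
    if "i \<noteq> 0" "\<exists>j\<in>{1..n}. M i j \<noteq> 0" for i
    unfolding f_def assoc_map_def using that by (auto simp: Let_def)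
  have fr: "fst (f i) \<in> {0..n} \<and> snd (f i) \<in> tropT" if i: "i \<in> {0..n}" for i
  proof (cases "i = 0 \<or> (\<forall>j\<in>{1..n}. M i j = 0)")
    case True then show ?thesis using fz[OF True] by (simp add: tropT_def)
  next
    case False
    then have i1: "i \<in> {1..n}" "\<exists>j\<in>{1..n}. M i j \<noteq> 0" using i by auto
    show ?thesis using fnz[of i] False the_row[OF wm i1] vf(2) by auto
  qed
  interpret pbs \<mu> n r f using assms(2) fr by unfold_locales auto
  have M: "\<forall>i\<in>{1..n}. \<forall>j\<in>{1..n}. val (M i j) = (if fst (f i) = j then snd (f i) else \<infinity>)"
  proof (intro ballI)
    fix i j assume i: "i \<in> {1..n}" and j: "j \<in> {1..n}"
    show "val (M i j) = (if fst (f i) = j then snd (f i) else \<infinity>)"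
    proof (cases "\<forall>j\<in>{1..n}. M i j = 0")
      case True
      then have "f i = (0, \<infinity>)" using fz by blast
      then show ?thesis using True j vf(1) by auto
    next
      case False
      then have ex: "\<exists>j\<in>{1..n}. M i j \<noteq> 0" by auto
      have i0: "i \<noteq> 0" using i by auto
      note tr = the_row[OF wm i ex]
      show ?thesis
      proof (cases "j = (THE j. j \<in> {1..n} \<and> M i j \<noteq> 0)")
        case True then show ?thesis using fnz[OF i0 ex] by simp
      next
        case False
        then have "M i j = 0" using tr j by blast
        then show ?thesis using fnz[OF i0 ex] False vf(1) by simp
      qed
    qed
  qed
  have fin: "\<forall>i\<in>{0..n}. fst (f i) \<noteq> 0 \<longrightarrow> snd (f i) \<noteq> \<infinity>"
  proof (intro ballI impI)
    fix i assume i: "i \<in> {0..n}" and nz: "fst (f i) \<noteq> 0"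
    have nc: "\<not> (i = 0 \<or> (\<forall>j\<in>{1..n}. M i j = 0))"
    proof
      assume "i = 0 \<or> (\<forall>j\<in>{1..n}. M i j = 0)"
      then show False using fz nz by fastforce
    qed
    then have i1: "i \<in> {1..n}" "\<exists>j\<in>{1..n}. M i j \<noteq> 0" "i \<noteq> 0" using i by auto
    show "snd (f i) \<noteq> \<infinity>" using fnz[OF i1(3) i1(2)] the_row[OF wm i1(1) i1(2)] vf(3) by auto
  qed
  have "pb_trop n r \<mu> f - {inf_vec n} = lin_image val n M r \<mu> - {inf_vec n}"
    unfolding lin_image_def by (rule main_eq[OF M B0_ex[OF fin]])
  then show "pb_trop n r \<mu> (assoc_map val n M) - {inf_vec n} = lin_image val n M r \<mu> - {inf_vec n}"
    unfolding f_def .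
qed

end
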